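(* Let $\boldsymbol\phi(n,m,\alpha,\beta,l)\in\mathbb C^N$ satisfy the condition equation set (for all arguments, only the indicated variable shifted) $\sigma_1\boldsymbol\phi(n-1,\cdot,l)=\boldsymbol\phi(n,\cdot,l)-\boldsymbol\phi(n-1,\cdot,l+1)$, $\sigma_2\boldsymbol\phi(m-1,\cdot,l)=\boldsymbol\phi(m,\cdot,l)-\boldsymbol\phi(m-1,\cdot,l+1)$, $\sigma_3\boldsymbol\phi(\alpha-1,\cdot,l)=\boldsymbol\phi(\alpha,\cdot,l)-\boldsymbol\phi(\alpha-1,\cdot,l+1)$, $\sigma_4\boldsymbol\phi(\beta-1,\cdot,l)=\boldsymbol\phi(\beta,\cdot,l)-\boldsymbol\phi(\beta-1,\cdot,l+1)$, and $\boldsymbol K\boldsymbol\phi(l)=\boldsymbol\phi(l+4)-\epsilon_1\boldsymbol\phi(l+3)+\epsilon_2\boldsymbol\phi(l+2)-\epsilon_3\boldsymbol\phi(l+1)$ for a constant $N\times N$ matrix $\boldsymbol K$. Let $f'=|0,\dots,N-1|$, $g'=|0,\dots,N-2,N|$, $h'=|0,\dots,N-2,N+1|$, $s'=|0,\dots,N-3,N-1,N|$ (Casoratians of $\boldsymbol\phi$). Then $$\widetilde f'(\sigma_1\dot f'+\dot g')-(\sigma_1-\sigma_4)f'\widetilde{\dot f}'-(\sigma_4\widetilde f'+\widetilde g')\dot f'=0,\quad \widehat f'(\sigma_2\dot f'+\dot g')-(\sigma_2-\sigma_4)f'\widehat{\dot f}'-(\sigma_4\widehat f'+\widehat g')\dot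 f'=0,$$ $$\widetilde f'(\sigma_4^2\dot f'-\sigma_4\dot g'+\dot h')+\sigma_1\widetilde f'(\dot g'-\sigma_4\dot f')-(\sigma_1-\sigma_4)f'(\widetilde{\dot g}'-\sigma_4\widetilde{\dot f}')-\dot f'\widetilde h'=0,$$ $$\widehat f'(\sigma_4^2\dot f'-\sigma_4\dot g'+\dot h')+\sigma_2\widehat f'(\dot g'-\sigma_4\dot f')-(\sigma_2-\sigma_4)f'(\widehat{\dot g}'-\sigma_4\widehat{\dot f}')-\dot f'\widehat h'=0,$$ $$\widetilde f'(\sigma_1g'+h')-\widetilde g'(\sigma_1f'+g')+f'\widetilde s'=0,\qquad \widehat f'(\sigma_2g'+h')-\widehat g'(\sigma_2f'+g')+f'\widehat s'=0,$$ $$(\sigma_1-\sigma_2)(\widetilde f'\widehat f'-f'\widehat{\widetilde f}')+\widetilde f'\widehat g'-\widehat f'\widetilde g'=0,$$ $$\big[Q(\sigma_1,\sigma_2)f'\widehat{\widetilde{\dot f}}'+s'\widehat{\widetilde{\dot f}}'+(\sigma_1+\sigma_2+\epsilon_1)g'\widehat{\widetilde{\dot f}}'-((\sigma_1+\sigma_2+\epsilon_1)f'+g')(\widehat{\widetilde{\dot g}}'-\sigma_4\widehat{\widetilde{\dot f}}')+f'(\widehat{\widetilde{\dot h}}'-\sigma_4\widehat{\widetilde{\dot g}}'+\sigma_4^2\widehat{\widetilde{\dot f}}')\big](\sigma_1-\sigma_2)-R(\sigma_1,\sigma_4)\widetilde f'\widehat{\dot f}'+R(\sigma_2,\sigma_4)\widehat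 f'\widetilde{\dot f}'=0.$$
   Context: Fix $\alpha_1,\alpha_2,\alpha_3,\delta\in\mathbb C$ and pairwise distinct $p,q,a,b\in\mathbb C$. Put $\sigma_1=p-\delta$, $\sigma_2=q-\delta$, $\sigma_3=a-\delta$, $\sigma_4=b-\delta$; $\epsilon_1=4\delta-\alpha_3$, $\epsilon_2=6\delta^2-3\delta\alpha_3+\alpha_2$, $\epsilon_3=4\delta^3-3\delta^2\alpha_3+2\delta\alpha_2-\alpha_1$; $Q(x,y)=(x+y)^2-xy+\epsilon_1(x+y)+\epsilon_2$; $R(x,y)=(x+y)(x^2+y^2)+\epsilon_1((x+y)^2-xy)+\epsilon_2(x+y)+\epsilon_3$. Casoratian notation: $|l_1,\dots,l_N|=\det(\boldsymbol\phi(l_1),\dots,\boldsymbol\phi(l_N))$ with $\boldsymbol\phi(l)=\boldsymbol\phi(n,m,\alpha,\beta,l)$; a run "$0,\dots,j$" with $j<0$ is empty, and if the listed indices number more than $N$ the symbol is $0$. Shifts: $\widetilde F=F(n+1,m,\beta)$, $\widehat F=F(n,m+1,\beta)$, $\dot F=F(n,m,\beta+1)$, composed as needed. *)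

theory Defs
  imports Complex_Main "Jordan_Normal_Form.Determinant"
begin

definition casoratian ::
  "(int \<Rightarrow> int \<Rightarrow> int \<Rightarrow> int \<Rightarrow> int \<Rightarrow> complex vec) \<Rightarrow> nat \<Rightarrow> int list
    \<Rightarrow> int \<Rightarrow> int \<Rightarrow> int \<Rightarrow> int \<Rightarrow> complex" where
  "casoratian \<phi> N ls n m a b =
     (if length ls > N then 0 else det (mat_of_cols N (map (\<lambda>l. \<phi> n m a b l) ls)))"

definition eps1 :: "complex \<Rightarrow> complex \<Rightarrow> complex \<Rightarrow> complex \<Rightarrow> complex" where
  "eps1 a1 a2 a3 \<delta> = 4*\<delta> - a3"
definition eps2 :: "complex \<Rightarrow> complex \<Rightarrow> complex \<Rightarrow> complex \<Rightarrow> complex" where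
  "eps2 a1 a2 a3 \<delta> = 6*\<delta>^2 - 3*\<delta>*a3 + a2"
definition eps3 :: "complex \<Rightarrow> complex \<Rightarrow> complex \<Rightarrow> complex \<Rightarrow> complex" where
  "eps3 a1 a2 a3 \<delta> = 4*\<delta>^3 - 3*\<delta>^2*a3 + 2*\<delta>*a2 - a1"

definition Qpol :: "complex \<Rightarrow> complex \<Rightarrow> complex \<Rightarrow> complex \<Rightarrow> complex" where
  "Qpol e1 e2 x y = (x+y)^2 - x*y + e1*(x+y) + e2"
definition Rpol :: "complex \<Rightarrow> complex \<Rightarrow> complex \<Rightarrow> complex \<Rightarrow> complex \<Rightarrow> complex" where
  "Rpol e1 e2 e3 x y = (x+y)*(x^2+y^2) + e1*((x+y)^2 - x*y) + e2*(x+y) + e3"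

end

theory Submission imports Defs begin

definition Dn :: "nat \<Rightarrow> (nat \<Rightarrow> nat \<Rightarrow> complex) \<Rightarrow> complex" where
  "Dn n r = det (mat n n (\<lambda>(i,j). r i j))"

lemma Dn_cong: fixes r r' :: "nat \<Rightarrow> nat \<Rightarrow> complex" shows "(\<And>i j. i < n \<Longrightarrow> j < n \<Longrightarrow> r i j = r' i j) \<Longrightarrow> Dn n r = Dn n r'"
  unfolding Dn_def by (rule arg_cong[of _ _ det], rule eq_matI, auto)

lemma Dn_perm: "Dn n r = (\<Sum>p\<in>{p. p permutes {0..<n}}. signof p * (\<Prod>i=0..<n. r i (p i)))"
proof -
  have "Dn n r = (\<Sum>p\<in>{p. p permutes {0..<n}}. signof p * (\<Prod>i=0..<n. mat n n (\<lambda>(i,j). r i j) $$ (i, p i)))"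
    unfolding Dn_def by (rule det_def', auto)
  also have "\<dots> = (\<Sum>p\<in>{p. p permutes {0..<n}}. signof p * (\<Prod>i=0..<n. r i (p i)))"
  proof (rule sum.cong[OF refl])
    fix p assume "p \<in> {p. p permutes {0..<n}}"
    hence pp: "p permutes {0..<n}" by auto
    have "(\<Prod>i=0..<n. mat n n (\<lambda>(i,j). r i j) $$ (i, p i)) = (\<Prod>i=0..<n. r i (p i))"
    proof (rule prod.cong[OF refl])
      fix i assume "i \<in> {0..<n}"
      moreover hence "p i \<in> {0..<n}" using permutes_in_image[OF pp] by auto
      ultimately show "mat n n (\<lambda>(i,j). r i j) $$ (i, p i) = r i (p i)" by auto
    qed
    thus "signof p * (\<Prod>i=0..<n. mat n n (\<lambda>(i,j). r i j) $$ (i, p i)) = signof p * (\<Prod>i=0..<n. r i (p i))" by simp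
  qed
  finally show ?thesis .
qed

lemma Dn_upd_prod: fixes n k :: nat and r :: "nat \<Rightarrow> nat \<Rightarrow> complex"
  assumes "k < n" "p permutes {0..<n}"
  shows "(\<Prod>i=0..<n. (r(k := z)) i (p i)) = z (p k) * (\<Prod>i\<in>{0..<n}-{k}. r i (p i))"
proof -
  have "(\<Prod>i=0..<n. (r(k := z)) i (p i)) = (r(k := z)) k (p k) * (\<Prod>i\<in>{0..<n}-{k}. (r(k := z)) i (p i))"
    by (rule prod.remove) (use assms in auto)
  also have "(\<Prod>i\<in>{0..<n}-{k}. (r(k := z)) i (p i)) = (\<Prod>i\<in>{0..<n}-{k}. r i (p i))"
    by (rule prod.cong, auto)
  finally show ?thesis by simp
qed

lemma Dn_upd_lin: assumes "k < n"
  shows "Dn n (r(k := (\<lambda>j. a * x j + b * y j))) = a * Dn n (r(k := x)) + b * Dn n (r(k := y))"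
proof -
  let ?P = "{p. p permutes {0..<n}}"
  let ?R = "\<lambda>p. (\<Prod>i\<in>{0..<n}-{k}. r i (p i))"
  have "Dn n (r(k := (\<lambda>j. a * x j + b * y j))) = (\<Sum>p\<in>?P. signof p * ((a * x (p k) + b * y (p k)) * ?R p))"
    unfolding Dn_perm by (rule sum.cong[OF refl], simp only: mem_Collect_eq Dn_upd_prod[OF assms])
  also have "\<dots> = a * (\<Sum>p\<in>?P. signof p * (x (p k) * ?R p)) + b * (\<Sum>p\<in>?P. signof p * (y (p k) * ?R p))"
    by (simp add: sum_distrib_left sum.distrib algebra_simps)
  also have "(\<Sum>p\<in>?P. signof p * (x (p k) * ?R p)) = Dn n (r(k := x))"
    unfolding Dn_perm by (rule sum.cong[OF refl], simp only: mem_Collect_eq Dn_upd_prod[OF assms])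
  also have "(\<Sum>p\<in>?P. signof p * (y (p k) * ?R p)) = Dn n (r(k := y))"
    unfolding Dn_perm by (rule sum.cong[OF refl], simp only: mem_Collect_eq Dn_upd_prod[OF assms])
  finally show ?thesis .
qed

lemma Dn_dup: assumes "k < n" "l < n" "k \<noteq> l" "\<And>j. j < n \<Longrightarrow> r k j = r l j"
  shows "Dn n r = 0"
  unfolding Dn_def
proof (rule det_identical_rows[OF _ assms(3) assms(1) assms(2)])
  show "mat n n (\<lambda>(i, j). r i j) \<in> carrier_mat n n" by auto
  show "row (mat n n (\<lambda>(i, j). r i j)) k = row (mat n n (\<lambda>(i, j). r i j)) l"
    using assms by (auto intro!: eq_vecI)
qed

lemma Dn_zero_row: assumes "k < n" "\<And>j. j < n \<Longrightarrow> r k j = 0" shows "Dn n r = 0"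
proof -
  have "Dn n r = Dn n (r(k := (\<lambda>j. 0 * r k j + 0 * r k j)))"
    by (rule Dn_cong, auto simp: assms)
  also have "\<dots> = 0 * Dn n (r(k := r k)) + 0 * Dn n (r(k := r k))" by (rule Dn_upd_lin[OF assms(1)])
  finally show ?thesis by simp
qed

lemma Dn_sum: assumes "k < n" "finite S"
  shows "Dn n (r(k := (\<lambda>j. \<Sum>t\<in>S. c t * y t j))) = (\<Sum>t\<in>S. c t * Dn n (r(k := y t)))"
  using assms(2)
proof (induction S rule: finite_induct)
  case empty
  show ?case by (simp only: sum.empty) (rule Dn_zero_row[OF assms(1)], simp)
next
  case (insert t S)
  have e: "(\<lambda>j. \<Sum>t\<in>insert t S. c t * y t j) = (\<lambda>j. c t * y t j + 1 * (\<Sum>t\<in>S. c t * y t j))"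
    using insert.hyps by auto
  have "Dn n (r(k := (\<lambda>j. \<Sum>t\<in>insert t S. c t * y t j))) = c t * Dn n (r(k := y t)) + 1 * Dn n (r(k := (\<lambda>j. \<Sum>t\<in>S. c t * y t j)))"
    unfolding e by (rule Dn_upd_lin[OF assms(1)])
  then show ?case using insert.IH insert.hyps by (simp add: fun_upd_def)
qed

lemma sum_oneback: fixes x :: "nat \<Rightarrow> complex" assumes "0 < k"
  shows "(\<Sum>l<k. (if l = k - 1 then c else 0) * x l) = c * x (k - 1)"
proof -
  have "(\<Sum>l<k. (if l = k - 1 then c else 0) * x l) = (\<Sum>l<k. if l = k - 1 then c * x l else 0)"
    by (rule sum.cong) auto
  also have "\<dots> = c * x (k - 1)" using assms by (subst sum.delta) auto
  finally show ?thesis .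
qed

lemma Dn_tri: fixes u w :: "nat \<Rightarrow> nat \<Rightarrow> complex" and cf :: "nat \<Rightarrow> nat \<Rightarrow> complex"
  assumes A: "\<And>k j. k < n \<Longrightarrow> j < n \<Longrightarrow> u k j = w k j + (\<Sum>l<k. cf k l * w l j)"
  shows "Dn n u = Dn n w"
proof -
  define mix where "mix m = (\<lambda>k. if m \<le> k then u k else w k)" for m
  have stp: "Dn n (mix m) = Dn n (mix (Suc m))" if m: "m < n" for m
  proof -
    have "Dn n (mix m) = Dn n ((mix (Suc m))(m := (\<lambda>j. 1 * mix (Suc m) m j + 1 * (\<Sum>l<m. cf m l * mix (Suc m) l j))))"
    proof (rule Dn_cong)
      fix i j assume i: "i < n" and j: "j < n"
      show "mix m i j = ((mix (Suc m))(m := (\<lambda>j. 1 * mix (Suc m) m j + 1 * (\<Sum>l<m. cf m l * mix (Suc m) l j)))) i j"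
      proof (cases "i = m")
        case True
        have "(\<Sum>l<m. cf m l * mix (Suc m) l j) = (\<Sum>l<m. cf m l * w l j)"
          by (rule sum.cong) (auto simp: mix_def)
        thus ?thesis using True A[OF i j] by (simp add: mix_def)
      next
        case False
        thus ?thesis by (auto simp: mix_def)
      qed
    qed
    also have "\<dots> = 1 * Dn n ((mix (Suc m))(m := mix (Suc m) m)) + 1 * Dn n ((mix (Suc m))(m := (\<lambda>j. \<Sum>l<m. cf m l * mix (Suc m) l j)))"
      by (rule Dn_upd_lin[OF m])
    also have "Dn n ((mix (Suc m))(m := (\<lambda>j. \<Sum>l<m. cf m l * mix (Suc m) l j))) = (\<Sum>l<m. cf m l * Dn n ((mix (Suc m))(m := mix (Suc m) l)))"
      by (rule Dn_sum[OF m], simp)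
    also have "\<dots> = 0"
    proof (rule sum.neutral, rule ballI)
      fix l assume "l \<in> {..<m}"
      hence l: "l < m" by auto
      have "Dn n ((mix (Suc m))(m := mix (Suc m) l)) = 0"
        by (rule Dn_dup[of m n l]) (use l m in auto)
      thus "cf m l * Dn n ((mix (Suc m))(m := mix (Suc m) l)) = 0" by simp
    qed
    finally show ?thesis by simp
  qed
  have main: "Dn n (mix m) = Dn n w" if "m \<le> n" for m
    using that
  proof (induct m rule: inc_induct)
    case base
    show ?case by (rule Dn_cong) (auto simp: mix_def)
  next
    case (step m)
    thus ?case using stp[of m] by simp
  qed
  have "Dn n u = Dn n (mix 0)" by (rule Dn_cong) (auto simp: mix_def)
  also have "\<dots> = Dn n w" using main[of 0] by simp
  finally show ?thesis .
qed

lemma Dn_lapl: fixes V :: "nat \<Rightarrow> nat \<Rightarrow> complex" and z :: "nat \<Rightarrow> complex"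
  shows "Dn (Suc n) (\<lambda>k j. if j < n then V k j else z k)
    = (\<Sum>k\<le>n. (-1)^(k+n) * z k * Dn n (\<lambda>i. if i < k then V i else V (Suc i)))"
proof -
  let ?A = "mat (Suc n) (Suc n) (\<lambda>(i,j). if j < n then V i j else z i)"
  have "Dn (Suc n) (\<lambda>k j. if j < n then V k j else z k) = det ?A" unfolding Dn_def by simp
  also have "\<dots> = (\<Sum>i<Suc n. ?A $$ (i,n) * cofactor ?A i n)"
    by (rule laplace_expansion_column) auto
  also have "\<dots> = (\<Sum>k\<le>n. (-1)^(k+n) * z k * Dn n (\<lambda>i. if i < k then V i else V (Suc i)))"
    unfolding lessThan_Suc_atMost
  proof (rule sum.cong[OF refl])
    fix k assume "k \<in> {..n}"
    hence k: "k \<le> n" by auto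
    have md: "mat_delete ?A k n = mat n n (\<lambda>(i,j). (if i < k then V i else V (Suc i)) j)"
      unfolding mat_delete_def using k by (intro eq_matI) auto
    show "?A $$ (k,n) * cofactor ?A k n = (-1)^(k+n) * z k * Dn n (\<lambda>i. if i < k then V i else V (Suc i))"
      unfolding cofactor_def md Dn_def using k by simp
  qed
  finally show ?thesis .
qed

lemma Dn_cramer: fixes V :: "nat \<Rightarrow> nat \<Rightarrow> complex" assumes "i0 < n"
  shows "(\<Sum>k\<le>n. (-1)^k * Dn n (\<lambda>i. if i < k then V i else V (Suc i)) * V k i0) = 0"
proof -
  have "Dn (Suc n) (\<lambda>k j. if j < n then V k j else V k i0) = 0"
    unfolding Dn_def
    by (rule det_identical_columns[of _ "Suc n" i0 n]) (use assms in \<open>auto intro!: eq_vecI\<close>)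
  hence "(\<Sum>k\<le>n. (-1)^(k+n) * V k i0 * Dn n (\<lambda>i. if i < k then V i else V (Suc i))) = 0"
    by (simp only: Dn_lapl)
  hence "(-1)^n * (\<Sum>k\<le>n. (-1)^(k+n) * V k i0 * Dn n (\<lambda>i. if i < k then V i else V (Suc i))) = 0" by simp
  moreover have "(-1)^n * (\<Sum>k\<le>n. (-1)^(k+n) * V k i0 * Dn n (\<lambda>i. if i < k then V i else V (Suc i)))
     = (\<Sum>k\<le>n. (-1)^k * Dn n (\<lambda>i. if i < k then V i else V (Suc i)) * V k i0)"
    by (simp add: sum_distrib_left power_add algebra_simps)
  ultimately show ?thesis by simp
qed

lemma Dn_cramer_fun: fixes V R :: "nat \<Rightarrow> nat \<Rightarrow> complex" assumes p: "p < n"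
  shows "(\<Sum>k\<le>n. (-1)^k * Dn n (\<lambda>i. if i < k then V i else V (Suc i)) * Dn n (R(p := V k))) = 0"
proof -
  have "(\<Sum>k\<le>n. (-1)^k * Dn n (\<lambda>i. if i < k then V i else V (Suc i)) * Dn n (R(p := V k)))
    = Dn n (R(p := (\<lambda>j. \<Sum>k\<le>n. (-1)^k * Dn n (\<lambda>i. if i < k then V i else V (Suc i)) * V k j)))"
    by (rule Dn_sum[symmetric]) (auto simp: p)
  also have "\<dots> = 0" by (rule Dn_zero_row[OF p]) (simp add: Dn_cramer)
  finally show ?thesis .
qed

lemma Dn_cramer_lin: fixes V R :: "nat \<Rightarrow> nat \<Rightarrow> complex" and Km :: "nat \<Rightarrow> nat \<Rightarrow> complex"
  assumes p: "p < n"
  shows "(\<Sum>k\<le>n. (-1)^k * Dn n (\<lambda>i. if i < k then V i else V (Suc i)) * Dn n (R(p := (\<lambda>i. \<Sum>j<n. Km i j * V k j)))) = 0"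
proof -
  have "(\<Sum>k\<le>n. (-1)^k * Dn n (\<lambda>i. if i < k then V i else V (Suc i)) * Dn n (R(p := (\<lambda>i. \<Sum>j<n. Km i j * V k j))))
    = Dn n (R(p := (\<lambda>i. \<Sum>k\<le>n. (-1)^k * Dn n (\<lambda>i. if i < k then V i else V (Suc i)) * (\<Sum>j<n. Km i j * V k j))))"
    by (rule Dn_sum[symmetric]) (auto simp: p)
  also have "\<dots> = 0"
  proof (rule Dn_zero_row[OF p])
    fix i assume "i < n"
    have "(\<Sum>k\<le>n. (-1)^k * Dn n (\<lambda>i. if i < k then V i else V (Suc i)) * (\<Sum>j<n. Km i j * V k j))
      = (\<Sum>j<n. Km i j * (\<Sum>k\<le>n. (-1)^k * Dn n (\<lambda>i. if i < k then V i else V (Suc i)) * V k j))"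
      by (simp add: sum_distrib_left sum_distrib_right algebra_simps sum.swap[of _ "{..n}"])
    also have "\<dots> = 0" by (rule sum.neutral) (simp add: Dn_cramer)
    finally show "((R(p := (\<lambda>i. \<Sum>k\<le>n. (-1)^k * Dn n (\<lambda>i. if i < k then V i else V (Suc i)) * (\<Sum>j<n. Km i j * V k j))))) p i = 0"
      by simp
  qed
  finally show ?thesis .
qed

lemma Dn_move: fixes Q :: "nat \<Rightarrow> nat \<Rightarrow> complex" assumes n: "0 < n"
  shows "Dn n (\<lambda>i. if i < n - 1 then Q i else x) = (-1)^(n-1) * Dn n (\<lambda>i. if i = 0 then x else Q (i - 1))"
proof -
  let ?A = "mat n n (\<lambda>(i,j). (if i < n - 1 then Q i else x) j)"
  have A: "?A \<in> carrier_mat n n" by auto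
  have sw: "swap_row_to_front ?A (n-1) = mat n n (\<lambda>(i,j). (if i = 0 then x else Q (i-1)) j)"
    by (subst swap_row_to_front_result[OF A]) (use n in \<open>auto intro!: eq_matI\<close>)
  have "det (swap_row_to_front ?A (n-1)) = (-1)^(n-1) * det ?A"
    by (rule swap_row_to_front_det[OF A]) (use n in auto)
  hence "Dn n (\<lambda>i. if i = 0 then x else Q (i - 1)) = (-1)^(n-1) * Dn n (\<lambda>i. if i < n - 1 then Q i else x)"
    unfolding Dn_def sw by simp
  thus ?thesis by simp
qed

definition Sh :: "complex \<Rightarrow> (nat \<Rightarrow> nat \<Rightarrow> complex) \<Rightarrow> nat \<Rightarrow> nat \<Rightarrow> complex" where
  "Sh c w = (\<lambda>k j. c * w k j + w (Suc k) j)"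

definition hook :: "nat \<Rightarrow> (nat \<Rightarrow> nat \<Rightarrow> complex) \<Rightarrow> nat \<Rightarrow> complex" where
  "hook n w k = Dn n (\<lambda>i. if i < k then w i else w (Suc i))"

definition ell :: "nat \<Rightarrow> (nat \<Rightarrow> nat \<Rightarrow> complex) \<Rightarrow> (nat \<Rightarrow> complex) \<Rightarrow> complex" where
  "ell n Q v = Dn n (\<lambda>i. if i < n - 1 then Q i else v)"

lemma ell_shift0: assumes n: "0 < n"
  shows "ell n (Sh c w) (w 0) = (-1)^(n-1) * Dn n w"
proof -
  have "ell n (Sh c w) (w 0) = (-1)^(n-1) * Dn n (\<lambda>i. if i = 0 then w 0 else Sh c w (i - 1))"
    unfolding ell_def by (rule Dn_move[OF n])
  also have "Dn n (\<lambda>i. if i = 0 then w 0 else Sh c w (i - 1)) = Dn n w"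
  proof (rule Dn_tri[where cf = "\<lambda>k l. if l = k - 1 then c else 0"])
    fix k j assume "k < n" "j < n"
    show "(if k = 0 then w 0 else Sh c w (k - 1)) j = w k j + (\<Sum>l<k. (if l = k - 1 then c else 0) * w l j)"
    proof (cases "k = 0")
      case False
      hence "(\<Sum>l<k. (if l = k - 1 then c else 0) * w l j) = c * w (k-1) j" by (intro sum_oneback) auto
      thus ?thesis using False by (simp add: Sh_def)
    qed simp
  qed
  finally show ?thesis .
qed

lemma Dn_exp: "Dn n (Sh c w) = (\<Sum>k\<le>n. c^k * hook n w k)"
proof -
  let ?R = "\<lambda>k j. if j < n then w k j else (-c)^k"
  let ?V = "\<lambda>k. if k = 0 then w 0 else Sh c w (k - 1)"
  let ?z = "\<lambda>k::nat. if k = 0 then (1::complex) else 0"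
  have 1: "Dn (Suc n) ?R = (\<Sum>k\<le>n. (-1)^(k+n) * (-c)^k * hook n w k)"
    unfolding hook_def by (rule Dn_lapl)
  have 2: "Dn (Suc n) (\<lambda>k j. if j < n then ?V k j else ?z k) = Dn (Suc n) ?R"
  proof (rule Dn_tri[where cf = "\<lambda>k l. if l = k - 1 then c else 0"])
    fix k j assume "k < Suc n" "j < Suc n"
    show "(if j < n then ?V k j else ?z k) = ?R k j + (\<Sum>l<k. (if l = k - 1 then c else 0) * ?R l j)"
    proof (cases "k = 0")
      case False
      hence "(\<Sum>l<k. (if l = k - 1 then c else 0) * ?R l j) = c * ?R (k-1) j" by (intro sum_oneback) auto
      moreover have "(-c)^k = - c * (-c)^(k-1)" using False by (cases k) auto
      ultimately show ?thesis using False by (auto simp: Sh_def)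
    qed simp
  qed
  have 3: "Dn (Suc n) (\<lambda>k j. if j < n then ?V k j else ?z k) = (-1)^n * Dn n (Sh c w)"
  proof -
    have "Dn (Suc n) (\<lambda>k j. if j < n then ?V k j else ?z k) = (\<Sum>k\<le>n. (-1)^(k+n) * ?z k * Dn n (\<lambda>i. if i < k then ?V i else ?V (Suc i)))"
      by (rule Dn_lapl)
    also have "\<dots> = (\<Sum>k\<le>n. if k = 0 then (-1)^n * Dn n (\<lambda>i. ?V (Suc i)) else 0)"
      by (rule sum.cong) auto
    also have "\<dots> = (-1)^n * Dn n (\<lambda>i. ?V (Suc i))" by (subst sum.delta) auto
    also have "(\<lambda>i. ?V (Suc i)) = Sh c w" by auto
    finally show ?thesis .
  qed
  have "(-1)^n * Dn n (Sh c w) = (\<Sum>k\<le>n. (-1)^(k+n) * (-c)^k * hook n w k)" using 1 2 3 by simp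
  hence "(-1)^n * ((-1)^n * Dn n (Sh c w)) = (-1)^n * (\<Sum>k\<le>n. (-1)^(k+n) * (-c)^k * hook n w k)" by simp
  hence "Dn n (Sh c w) = (\<Sum>k\<le>n. (-1)^n * ((-1)^(k+n) * (-c)^k * hook n w k))" by (simp add: sum_distrib_left)
  also have "\<dots> = (\<Sum>k\<le>n. c^k * hook n w k)"
  proof (rule sum.cong[OF refl])
    fix k
    have "(-1::complex)^n * ((-1)^(k+n) * (-c)^k) = c^k"
      by (simp add: power_add power_minus' algebra_simps)
    thus "(-1)^n * ((-1)^(k+n) * (-c)^k * hook n w k) = c^k * hook n w k" by (simp add: mult.assoc[symmetric])
  qed
  finally show ?thesis .
qed

lemma ell_upd: assumes "0 < n" shows "ell n Q v = Dn n (Q(n - 1 := v))"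
  unfolding ell_def by (rule Dn_cong) auto

lemma ell_lin: assumes "0 < n" shows "ell n Q (\<lambda>j. x * u j + y * v j) = x * ell n Q u + y * ell n Q v"
  unfolding ell_upd[OF assms] by (rule Dn_upd_lin) (use assms in auto)

lemma ell_sum: assumes "0 < n" "finite S"
  shows "ell n Q (\<lambda>j. \<Sum>t\<in>S. c t * y t j) = (\<Sum>t\<in>S. c t * ell n Q (y t))"
  unfolding ell_upd[OF assms(1)] by (rule Dn_sum) (use assms in auto)

lemma ell_lin1: assumes "0 < n" shows "ell n Q (\<lambda>j. x * u j + v j) = x * ell n Q u + ell n Q v"
  using ell_lin[OF assms, where x=x and u=u and y=1 and v=v and Q=Q] by simp

lemma ell_cong: "(\<And>j. j < n \<Longrightarrow> v j = v' j) \<Longrightarrow> ell n Q v = ell n Q v'"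
  unfolding ell_def by (rule Dn_cong) auto

lemma ell_block: assumes "k < n - 1" shows "ell n Q (Q k) = 0"
  unfolding ell_def by (rule Dn_dup[of k n "n - 1"]) (use assms in auto)

lemma ell_top: assumes "0 < n" shows "ell n Q (Q (n - 1)) = Dn n Q"
  unfolding ell_def
proof (rule Dn_cong)
  fix i j assume i: "i < n"
  show "(if i < n - 1 then Q i else Q (n - 1)) j = Q i j"
  proof (cases "i < n - 1")
    case False
    hence "i = n - 1" using i by linarith
    thus ?thesis by simp
  qed simp
qed

definition GG :: "nat \<Rightarrow> (nat \<Rightarrow> nat \<Rightarrow> complex) \<Rightarrow> complex" where "GG n w = ell n w (w n)"
definition HH :: "nat \<Rightarrow> (nat \<Rightarrow> nat \<Rightarrow> complex) \<Rightarrow> complex" where "HH n w = ell n w (w (Suc n))"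
definition ss :: "nat \<Rightarrow> (nat \<Rightarrow> nat \<Rightarrow> complex) \<Rightarrow> complex" where "ss n w = (if 2 \<le> n then hook n w (n - 2) else 0)"

lemma hook_top: "hook n w n = Dn n w" unfolding hook_def by (rule Dn_cong) auto
lemma hook_G: assumes "0 < n" shows "hook n w (n - 1) = GG n w"
  unfolding hook_def GG_def ell_def
proof (rule Dn_cong)
  fix i j assume i: "i < n"
  show "(if i < n - 1 then w i else w (Suc i)) j = (if i < n - 1 then w i else w n) j"
  proof (cases "i < n - 1")
    case False
    hence "Suc i = n" using i by linarith
    thus ?thesis using False by simp
  qed simp
qed

lemma sgn1: assumes "0 < n" shows "(-1::complex)^(n-1) = - ((-1)^n)"
proof -
  have "(-1::complex)^n = (-1)^(n-1) * (-1)^1" using power_add[of "-1::complex" "n-1" 1] assms by simp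
  thus ?thesis by simp
qed
lemma sgn2: assumes "2 \<le> n" shows "(-1::complex)^(n-2) = (-1)^n"
proof -
  have e: "n = (n-2) + 2" using assms by simp
  have "(-1::complex)^n = (-1)^(n-2) * (-1)^2" by (subst e, rule power_add)
  thus ?thesis by simp
qed

lemma sum_top2: fixes f :: "nat \<Rightarrow> complex" assumes "0 < n"
  shows "(\<Sum>k\<le>n. f k) = (\<Sum>k<n - 1. f k) + f (n - 1) + f n"
proof -
  have e: "{..n} = insert n (insert (n-1) {..<n-1})" using assms by auto
  have "(\<Sum>k\<in>insert n (insert (n-1) {..<n-1}). f k) = f n + (\<Sum>k\<in>insert (n-1) {..<n-1}. f k)"
    by (rule sum.insert) (use assms in auto)
  also have "(\<Sum>k\<in>insert (n-1) {..<n-1}. f k) = f (n-1) + (\<Sum>k<n-1. f k)"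
    by (rule sum.insert) auto
  finally show ?thesis unfolding e by (simp add: algebra_simps)
qed

lemma sum_last_only: fixes f :: "nat \<Rightarrow> complex" assumes "\<And>k. k < m \<Longrightarrow> k \<noteq> m - 1 \<Longrightarrow> f k = 0"
  shows "(\<Sum>k<m. f k) = (if 0 < m then f (m - 1) else 0)"
proof (cases m)
  case (Suc m')
  have "(\<Sum>k<m. f k) = (\<Sum>k<m'. f k) + f m'" using Suc by simp
  moreover have "(\<Sum>k<m'. f k) = 0" by (rule sum.neutral) (use assms Suc in auto)
  ultimately show ?thesis using Suc by simp
qed simp

lemma cramer_ell: assumes "0 < n"
  shows "(\<Sum>k\<le>n. (-1)^k * hook n V k * ell n Q (V k)) = 0"
  unfolding ell_upd[OF assms] hook_def by (rule Dn_cramer_fun) (use assms in auto)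


lemma I5: assumes n: "0 < n"
  shows "Dn n (Sh c a) * (c * GG n a + HH n a) - GG n (Sh c a) * (c * Dn n a + GG n a) + Dn n a * ss n (Sh c a) = 0"
proof -
  let ?A = "Sh c a"
  have la: "ell n a (?A k) = c * ell n a (a k) + ell n a (a (Suc k))" for k
    unfolding Sh_def by (rule ell_lin1[OF n])
  have z: "ell n a (a k) = 0" if "k < n - 1" for k using ell_block[OF that] .
  have C: "(\<Sum>k\<le>n. (-1)^k * hook n ?A k * ell n a (?A k)) = 0" by (rule cramer_ell[OF n])
  have low: "(\<Sum>k<n-1. (-1)^k * hook n ?A k * ell n a (?A k)) = (-1)^n * ss n ?A * Dn n a"
  proof -
    have "(\<Sum>k<n-1. (-1)^k * hook n ?A k * ell n a (?A k)) = (if 0 < n - 1 then (-1)^(n-1-1) * hook n ?A (n-1-1) * ell n a (?A (n-1-1)) else 0)"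
    proof (rule sum_last_only)
      fix k assume "k < n - 1" "k \<noteq> n - 1 - 1"
      hence "k < n - 1" "Suc k < n - 1" by auto
      thus "(-1)^k * hook n ?A k * ell n a (?A k) = 0" unfolding la by (simp add: ell_block)
    qed
    also have "\<dots> = (-1)^n * ss n ?A * Dn n a"
    proof (cases "2 \<le> n")
      case True
      have e1: "Suc (n-2) = n - 1" using True by arith
      have e2: "ell n a (a (n-2)) = 0" by (rule ell_block) (use True in arith)
      have "ell n a (?A (n-2)) = Dn n a" unfolding la e1 e2 ell_top[OF n, of a] by simp
      moreover have "n - 1 - 1 = n - 2" by arith
      ultimately show ?thesis using True by (simp add: ss_def sgn2)
    next
      case False thus ?thesis by (simp add: ss_def)
    qed
    finally show ?thesis .
  qed
  have t1: "ell n a (?A (n-1)) = c * Dn n a + GG n a"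
  proof -
    have "Suc (n-1) = n" using n by simp
    thus ?thesis unfolding la GG_def ell_top[OF n, of a] by simp
  qed
  have t2: "ell n a (?A n) = c * GG n a + HH n a"
    unfolding la GG_def HH_def ..
  from C have "(-1)^n * ss n ?A * Dn n a + (-1)^(n-1) * GG n ?A * (c * Dn n a + GG n a) + (-1)^n * Dn n ?A * (c * GG n a + HH n a) = 0"
    unfolding sum_top2[OF n] low t1 t2 hook_G[OF n] hook_top .
  hence "(-1)^n * (Dn n ?A * (c * GG n a + HH n a) - GG n ?A * (c * Dn n a + GG n a) + Dn n a * ss n ?A) = 0"
    unfolding sgn1[OF n] by (simp add: algebra_simps)
  thus ?thesis by simp
qed

lemma negpow: "(-1::complex)^k * (-c)^k = c^k"
  by (simp add: power_mult_distrib[symmetric])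

lemma I1: assumes n: "0 < n"
  shows "Dn n (Sh c a) * (c * Dn n (Sh d a) + GG n (Sh d a)) - (c - d) * Dn n a * Dn n (Sh c (Sh d a))
     - (d * Dn n (Sh c a) + GG n (Sh c a)) * Dn n (Sh d a) = 0"
proof -
  let ?A = "Sh c a"
  let ?B = "Sh d a"
  define v where "v k = ell n ?A (a k)" for k
  define v0 where "v0 = v 0"
  define sg where "sg = (-1::complex)^n"
  have sg1: "(-1::complex)^(n-1) = - sg" unfolding sg_def by (rule sgn1[OF n])
  have sgsg: "sg * sg = 1" unfolding sg_def by simp
  have v0: "v0 = - sg * Dn n a" unfolding v0_def v_def using ell_shift0[OF n, of c a] sg1 by simp
  have lA: "ell n ?A (?A k) = c * v k + v (Suc k)" for k unfolding v_def Sh_def by (rule ell_lin1[OF n])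
  have lB: "ell n ?A (?B k) = d * v k + v (Suc k)" for k unfolding v_def Sh_def by (rule ell_lin1[OF n])
  have zA: "ell n ?A (?A k) = 0" if "k < n - 1" for k by (rule ell_block[OF that])
  have topA: "ell n ?A (?A (n-1)) = Dn n ?A" by (rule ell_top[OF n])
  have GA: "ell n ?A (?A n) = GG n ?A" unfolding GG_def ..
  have geo: "v k = (-c)^k * v0" if "k \<le> n - 1" for k using that
  proof (induct k)
    case 0 show ?case by (simp add: v0_def)
  next
    case (Suc k)
    hence "k < n - 1" by simp
    hence "0 = c * v k + v (Suc k)" using lA[of k] zA[of k] by simp
    hence "v (Suc k) = - c * v k" by (simp add: eq_neg_iff_add_eq_0 algebra_simps)
    thus ?case using Suc by simp
  qed
  have sn: "Suc (n-1) = n" using n by simp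
  have pw: "(-c)^n = - c * (-c)^(n-1)" using n by (metis power_Suc sn mult_minus_left)
  have vn: "v n = Dn n ?A + (-c)^n * v0"
  proof -
    have "Dn n ?A = c * v (n-1) + v n" using lA[of "n-1"] topA sn by simp
    hence "v n = Dn n ?A - c * v (n-1)" by simp
    thus ?thesis using geo[of "n-1"] pw by simp
  qed
  have vn1: "v (Suc n) = GG n ?A - c * v n" using lA[of n] GA by simp
  define corr where "corr k = (if k = n - 1 then Dn n ?A else if k = n then (d - c) * Dn n ?A + GG n ?A else 0)" for k
  have lBf: "ell n ?A (?B k) = (d - c) * ((-c)^k * v0) + corr k" if k: "k \<le> n" for k
  proof (cases "k < n - 1")
    case True
    have "v (Suc k) = (-c)^(Suc k) * v0" using geo[of "Suc k"] True by simp
    moreover have "v k = (-c)^k * v0" using geo[of k] True by simp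
    moreover have "corr k = 0" unfolding corr_def using True by auto
    ultimately show ?thesis unfolding lB by (simp add: algebra_simps)
  next
    case False
    hence "k = n - 1 \<or> k = n" using k by arith
    thus ?thesis
    proof
      assume kk: "k = n - 1"
      have "corr k = Dn n ?A" unfolding corr_def kk by simp
      thus ?thesis unfolding lB kk sn vn using geo[of "n-1"] pw by (simp add: algebra_simps)
    next
      assume kk: "k = n"
      have "n \<noteq> n - 1" using n by arith
      hence "corr k = (d - c) * Dn n ?A + GG n ?A" unfolding corr_def kk by simp
      thus ?thesis unfolding lB kk vn1 vn by (simp add: algebra_simps)
    qed
  qed
  have Cr: "(\<Sum>k\<le>n. (-1)^k * hook n ?B k * ell n ?A (?B k)) = 0" by (rule cramer_ell[OF n])
  have "(\<Sum>k\<le>n. (-1)^k * hook n ?B k * ell n ?A (?B k))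
      = (\<Sum>k\<le>n. (d - c) * v0 * (c^k * hook n ?B k) + (-1)^k * hook n ?B k * corr k)"
  proof (rule sum.cong[OF refl])
    fix k assume "k \<in> {..n}"
    hence e: "ell n ?A (?B k) = (d - c) * ((-c)^k * v0) + corr k" using lBf by auto
    have "(-1)^k * hook n ?B k * ell n ?A (?B k) = (d - c) * v0 * (((-1)^k * (-c)^k) * hook n ?B k) + (-1)^k * hook n ?B k * corr k"
      unfolding e by (simp add: algebra_simps)
    thus "(-1)^k * hook n ?B k * ell n ?A (?B k) = (d - c) * v0 * (c^k * hook n ?B k) + (-1)^k * hook n ?B k * corr k"
      unfolding negpow .
  qed
  also have "\<dots> = (d - c) * v0 * Dn n (Sh c ?B) + (\<Sum>k\<le>n. (-1)^k * hook n ?B k * corr k)"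
    by (simp add: sum.distrib sum_distrib_left[symmetric] Dn_exp)
  also have "(\<Sum>k\<le>n. (-1)^k * hook n ?B k * corr k) = - sg * GG n ?B * Dn n ?A + sg * Dn n ?B * ((d - c) * Dn n ?A + GG n ?A)"
  proof -
    have "(\<Sum>k<n-1. (-1)^k * hook n ?B k * corr k) = 0" by (rule sum.neutral) (auto simp: corr_def)
    moreover have "corr (n-1) = Dn n ?A" "corr n = (d - c) * Dn n ?A + GG n ?A" unfolding corr_def using n by auto
    ultimately show ?thesis unfolding sum_top2[OF n] hook_G[OF n] hook_top sg1 sg_def by simp
  qed
  finally have E: "(d - c) * v0 * Dn n (Sh c ?B) + (- sg * GG n ?B * Dn n ?A + sg * Dn n ?B * ((d - c) * Dn n ?A + GG n ?A)) = 0"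
    using Cr by simp
  hence "sg * ((d - c) * Dn n a * Dn n (Sh c ?B) + GG n ?B * Dn n ?A - Dn n ?B * ((d - c) * Dn n ?A + GG n ?A)) = 0"
    unfolding v0 by (simp add: algebra_simps)
  hence "(d - c) * Dn n a * Dn n (Sh c ?B) + GG n ?B * Dn n ?A - Dn n ?B * ((d - c) * Dn n ?A + GG n ?A) = 0"
    using sgsg by (metis mult_eq_0_iff one_neq_zero)
  thus ?thesis by (simp add: algebra_simps)
qed

lemma Dn_exp2: assumes n: "0 < n"
  shows "(-1)^n * (\<Sum>k<n. c^k * hook n (\<lambda>k. if k < n then w k else w (Suc k)) k) + (-c)^(Suc n) * Dn n w
       = (-1)^n * (GG n (Sh c w) - c * Dn n (Sh c w))"
proof -
  let ?J = "\<lambda>k. if k < n then w k else w (Suc k)"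
  let ?z = "\<lambda>k. if k < n then (-c)^k else (-c)^(Suc n)"
  let ?R = "\<lambda>k j. if j < n then ?J k j else ?z k"
  have sn: "Suc (n-1) = n" using n by simp
  have 1: "Dn (Suc n) ?R = (\<Sum>k\<le>n. (-1)^(k+n) * ?z k * hook n ?J k)"
    unfolding hook_def by (rule Dn_lapl)
  let ?V = "\<lambda>k. if k = 0 then w 0 else if k < n then Sh c w (k-1) else (\<lambda>j. w (Suc n) j - c^2 * w (n-1) j)"
  let ?zz = "\<lambda>k::nat. if k = 0 then (1::complex) else 0"
  define cfx where "cfx = (\<lambda>k l::nat. if l = k - 1 then (if k < n then c else - (c^2)) else (0::complex))"
  have 2: "Dn (Suc n) (\<lambda>k j. if j < n then ?V k j else ?zz k) = Dn (Suc n) ?R"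
  proof (rule Dn_tri[where cf = cfx], goal_cases)
    case (1 k j)
    hence k: "k < Suc n" and j: "j < Suc n" by auto
    show ?case
    proof (cases "k = 0")
      case True thus ?thesis using n by (simp add: cfx_def)
    next
      case False
      have s: "(\<Sum>l<k. (if l = k - 1 then (if k < n then c else - (c^2)) else 0) * ?R l j) = (if k < n then c else - (c^2)) * ?R (k-1) j"
        using False by (intro sum_oneback) auto
      have km: "k - 1 < n" using k False by arith
      have pk: "(-c)^k = - c * (-c)^(k-1)" using False by (metis Suc_pred' not_gr_zero power_Suc mult_minus_left)
      show ?thesis
      proof (cases "k < n")
        case True
        thus ?thesis unfolding cfx_def s using False km pk by (auto simp: Sh_def)
      next
        case False2: False
        hence kn: "k = n" using k by arith
        have pn: "(-c)^(Suc n) = c^2 * (-c)^(n-1)" using n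
          by (metis sn power_Suc power2_eq_square mult.assoc mult_minus_left minus_mult_minus)
        show ?thesis unfolding cfx_def s using False kn km pn n by (auto simp: Sh_def)
      qed
    qed
  qed
  have 3: "Dn (Suc n) (\<lambda>k j. if j < n then ?V k j else ?zz k) = (-1)^n * Dn n (\<lambda>i. ?V (Suc i))"
  proof -
    have "Dn (Suc n) (\<lambda>k j. if j < n then ?V k j else ?zz k) = (\<Sum>k\<le>n. (-1)^(k+n) * ?zz k * Dn n (\<lambda>i. if i < k then ?V i else ?V (Suc i)))"
      by (rule Dn_lapl)
    also have "\<dots> = (\<Sum>k\<le>n. if k = 0 then (-1)^n * Dn n (\<lambda>i. ?V (Suc i)) else 0)"
      by (rule sum.cong) auto
    also have "\<dots> = (-1)^n * Dn n (\<lambda>i. ?V (Suc i))" by (subst sum.delta) auto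
    finally show ?thesis .
  qed
  have 4: "Dn n (\<lambda>i. ?V (Suc i)) = GG n (Sh c w) - c * Dn n (Sh c w)"
  proof -
    have "Dn n (\<lambda>i. ?V (Suc i)) = ell n (Sh c w) (\<lambda>j. 1 * Sh c w n j + (- c) * Sh c w (n-1) j)"
      unfolding ell_def
    proof (rule Dn_cong)
      fix i j assume "i < n" "j < n"
      show "?V (Suc i) j = (if i < n - 1 then Sh c w i else (\<lambda>j. 1 * Sh c w n j + (- c) * Sh c w (n-1) j)) j"
        using sn by (auto simp: Sh_def power2_eq_square algebra_simps)
    qed
    also have "\<dots> = 1 * GG n (Sh c w) + (- c) * Dn n (Sh c w)"
      unfolding ell_lin[OF n] GG_def ell_top[OF n] ..
    finally show ?thesis by simp
  qed
  have "(\<Sum>k\<le>n. (-1)^(k+n) * ?z k * hook n ?J k) = (\<Sum>k<n. (-1)^(k+n) * ?z k * hook n ?J k) + (-1)^(n+n) * ?z n * hook n ?J n"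
    by (simp add: lessThan_Suc_atMost[symmetric])
  also have "(\<Sum>k<n. (-1)^(k+n) * ?z k * hook n ?J k) = (-1)^n * (\<Sum>k<n. c^k * hook n ?J k)"
    unfolding sum_distrib_left
  proof (rule sum.cong[OF refl])
    fix k assume "k \<in> {..<n}"
    hence "?z k = (-c)^k" by simp
    moreover have "(-1::complex)^(k+n) * (-c)^k = (-1)^n * c^k"
      using negpow[of k c] by (simp add: power_add algebra_simps)
    ultimately show "(-1)^(k+n) * ?z k * hook n ?J k = (-1)^n * (c^k * hook n ?J k)" by simp
  qed
  also have "(-1::complex)^(n+n) = 1" by (simp add: power_add)
  also have "hook n ?J n = Dn n w" unfolding hook_def by (rule Dn_cong) auto
  finally have "Dn (Suc n) ?R = (-1)^n * (\<Sum>k<n. c^k * hook n ?J k) + (-c)^(Suc n) * Dn n w"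
    using 1 by simp
  thus ?thesis using 2 3 4 by simp
qed

lemma I3rel: assumes n: "0 < n"
  shows "(d - c) * Dn n a * (GG n (Sh c (Sh d a)) - c * Dn n (Sh c (Sh d a))) + HH n (Sh d a) * Dn n (Sh c a)
     - Dn n (Sh d a) * ((d - c) * (GG n (Sh c a) - c * Dn n (Sh c a)) + HH n (Sh c a)) = 0"
proof -
  let ?A = "Sh c a"
  let ?B = "Sh d a"
  let ?J = "\<lambda>k. if k < n then ?B k else ?B (Suc k)"
  define v where "v k = ell n ?A (a k)" for k
  define v0 where "v0 = v 0"
  define sg where "sg = (-1::complex)^n"
  define P where "P = (-c)^n"
  have sg1: "(-1::complex)^(n-1) = - sg" unfolding sg_def by (rule sgn1[OF n])
  have sgsg: "sg * sg = 1" unfolding sg_def by simp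
  have v0: "v0 = - sg * Dn n a" unfolding v0_def v_def using ell_shift0[OF n, of c a] sg1 by simp
  have lA: "ell n ?A (?A k) = c * v k + v (Suc k)" for k unfolding v_def Sh_def by (rule ell_lin1[OF n])
  have lB: "ell n ?A (?B k) = d * v k + v (Suc k)" for k unfolding v_def Sh_def by (rule ell_lin1[OF n])
  have zA: "ell n ?A (?A k) = 0" if "k < n - 1" for k by (rule ell_block[OF that])
  have topA: "ell n ?A (?A (n-1)) = Dn n ?A" by (rule ell_top[OF n])
  have GA: "ell n ?A (?A n) = GG n ?A" unfolding GG_def ..
  have HA: "ell n ?A (?A (Suc n)) = HH n ?A" unfolding HH_def ..
  have geo: "v k = (-c)^k * v0" if "k \<le> n - 1" for k using that
  proof (induct k)
    case 0 show ?case by (simp add: v0_def)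
  next
    case (Suc k)
    hence "k < n - 1" by simp
    hence "0 = c * v k + v (Suc k)" using lA[of k] zA[of k] by simp
    hence "v (Suc k) = - c * v k" by (simp add: eq_neg_iff_add_eq_0 algebra_simps)
    thus ?case using Suc by simp
  qed
  have sn: "Suc (n-1) = n" using n by simp
  have pw: "P = - c * (-c)^(n-1)" unfolding P_def using n by (metis power_Suc sn mult_minus_left)
  have vn: "v n = Dn n ?A + P * v0"
  proof -
    have "Dn n ?A = c * v (n-1) + v n" using lA[of "n-1"] topA sn by simp
    hence "v n = Dn n ?A - c * v (n-1)" by simp
    thus ?thesis using geo[of "n-1"] pw by simp
  qed
  have vn1: "v (Suc n) = GG n ?A - c * v n" using lA[of n] GA by simp
  have vn2: "v (Suc (Suc n)) = HH n ?A - c * v (Suc n)" using lA[of "Suc n"] HA by simp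
  define corr where "corr k = (if k = n - 1 then Dn n ?A else 0)" for k
  have lJ: "ell n ?A (?J k) = (d - c) * ((-c)^k * v0) + corr k" if k: "k < n" for k
  proof -
  have Jk: "?J k = ?B k" using k by simp
  show ?thesis
  proof (cases "k < n - 1")
    case True
    have "v (Suc k) = (-c)^(Suc k) * v0" using geo[of "Suc k"] True by simp
    moreover have "v k = (-c)^k * v0" using geo[of k] True by simp
    moreover have "corr k = 0" unfolding corr_def using True by auto
    ultimately show ?thesis unfolding Jk lB using k by (simp add: algebra_simps)
  next
    case False
    hence kk: "k = n - 1" using k by arith
    have "corr k = Dn n ?A" unfolding corr_def kk by simp
    thus ?thesis unfolding Jk kk using k kk lB[of "n-1"] sn vn geo[of "n-1"] pw by (simp add: algebra_simps)
  qed
  qed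
  have lJn: "ell n ?A (?J n) = (d - c) * (GG n ?A - c * Dn n ?A - c * P * v0) + HH n ?A"
    using lB[of "Suc n"] vn2 vn1 vn by (simp add: algebra_simps)
  have Cr: "(\<Sum>k\<le>n. (-1)^k * hook n ?J k * ell n ?A (?J k)) = 0" by (rule cramer_ell[OF n])
  have "(\<Sum>k\<le>n. (-1)^k * hook n ?J k * ell n ?A (?J k))
     = (\<Sum>k<n. (-1)^k * hook n ?J k * ell n ?A (?J k)) + sg * hook n ?J n * ell n ?A (?J n)"
    unfolding sg_def by (simp add: lessThan_Suc_atMost[symmetric])
  also have "(\<Sum>k<n. (-1)^k * hook n ?J k * ell n ?A (?J k))
     = (\<Sum>k<n. (d - c) * v0 * (c^k * hook n ?J k) + (-1)^k * hook n ?J k * corr k)"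
  proof (rule sum.cong[OF refl])
    fix k assume "k \<in> {..<n}"
    hence e: "ell n ?A (?J k) = (d - c) * ((-c)^k * v0) + corr k" using lJ by auto
    have "(-1)^k * hook n ?J k * ell n ?A (?J k) = (d - c) * v0 * (((-1)^k * (-c)^k) * hook n ?J k) + (-1)^k * hook n ?J k * corr k"
      unfolding e by (simp add: algebra_simps)
    thus "(-1)^k * hook n ?J k * ell n ?A (?J k) = (d - c) * v0 * (c^k * hook n ?J k) + (-1)^k * hook n ?J k * corr k"
      unfolding negpow .
  qed
  also have "\<dots> = (d - c) * v0 * (\<Sum>k<n. c^k * hook n ?J k) + (\<Sum>k<n. (-1)^k * hook n ?J k * corr k)"
    by (simp add: sum.distrib sum_distrib_left)
  also have "(\<Sum>k<n. (-1)^k * hook n ?J k * corr k) = - sg * HH n ?B * Dn n ?A"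
  proof -
    have "(\<Sum>k<n. (-1)^k * hook n ?J k * corr k) = (if 0 < n then (-1)^(n-1) * hook n ?J (n-1) * corr (n-1) else 0)"
      by (rule sum_last_only) (auto simp: corr_def)
    moreover have "hook n ?J (n-1) = HH n ?B"
      unfolding hook_def HH_def ell_def
    proof (rule Dn_cong)
      fix i j assume i: "i < n"
      show "(if i < n - 1 then ?J i else ?J (Suc i)) j = (if i < n - 1 then ?B i else ?B (Suc n)) j"
      proof (cases "i < n - 1")
        case False hence "Suc i = n" using i by arith
        thus ?thesis using False by simp
      qed (use i in simp)
    qed
    ultimately show ?thesis using n sg1 by (simp add: corr_def)
  qed
  also have "hook n ?J n = Dn n ?B" unfolding hook_def by (rule Dn_cong) auto
  finally have E: "(d - c) * v0 * (\<Sum>k<n. c^k * hook n ?J k) + - sg * HH n ?B * Dn n ?A + sg * Dn n ?B * ell n ?A (?J n) = 0"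
    using Cr by simp
  have X: "sg * (\<Sum>k<n. c^k * hook n ?J k) = sg * (GG n (Sh c ?B) - c * Dn n (Sh c ?B)) - (-c)^(Suc n) * Dn n ?B"
    using Dn_exp2[OF n, of c ?B] unfolding sg_def by (simp add: algebra_simps)
  have pS: "(-c)^(Suc n) = - c * P" unfolding P_def by simp
  from E have "sg * ((d - c) * v0 * (\<Sum>k<n. c^k * hook n ?J k) + - sg * HH n ?B * Dn n ?A + sg * Dn n ?B * ell n ?A (?J n)) = 0"
    by simp
  hence "(d - c) * v0 * (sg * (\<Sum>k<n. c^k * hook n ?J k)) - (sg * sg) * HH n ?B * Dn n ?A + (sg * sg) * Dn n ?B * ell n ?A (?J n) = 0"
    by (simp add: algebra_simps)
  hence "(d - c) * v0 * (sg * (GG n (Sh c ?B) - c * Dn n (Sh c ?B)) + c * P * Dn n ?B) - HH n ?B * Dn n ?A + Dn n ?B * ((d - c) * (GG n ?A - c * Dn n ?A - c * P * v0) + HH n ?A) = 0"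
    unfolding X pS sgsg lJn by (simp add: algebra_simps)
  hence "(d - c) * v0 * sg * (GG n (Sh c ?B) - c * Dn n (Sh c ?B)) - HH n ?B * Dn n ?A + Dn n ?B * ((d - c) * (GG n ?A - c * Dn n ?A) + HH n ?A) = 0"
    by (simp add: algebra_simps)
  hence "(d - c) * (v0 * sg) * (GG n (Sh c ?B) - c * Dn n (Sh c ?B)) - HH n ?B * Dn n ?A + Dn n ?B * ((d - c) * (GG n ?A - c * Dn n ?A) + HH n ?A) = 0"
    by (simp only: mult.assoc)
  moreover have "v0 * sg = - Dn n a" unfolding v0 using sgsg by (simp add: algebra_simps)
  ultimately have "(d - c) * (- Dn n a) * (GG n (Sh c ?B) - c * Dn n (Sh c ?B)) - HH n ?B * Dn n ?A + Dn n ?B * ((d - c) * (GG n ?A - c * Dn n ?A) + HH n ?A) = 0"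
    by simp
  hence "- ((d - c) * Dn n a * (GG n (Sh c ?B) - c * Dn n (Sh c ?B)) + HH n ?B * Dn n ?A - Dn n ?B * ((d - c) * (GG n ?A - c * Dn n ?A) + HH n ?A)) = 0"
    by (simp add: algebra_simps)
  thus ?thesis by simp
qed

lemma I3: assumes n: "0 < n"
  shows "Dn n (Sh c a) * (d^2 * Dn n (Sh d a) - d * GG n (Sh d a) + HH n (Sh d a))
     + c * Dn n (Sh c a) * (GG n (Sh d a) - d * Dn n (Sh d a))
     - (c - d) * Dn n a * (GG n (Sh c (Sh d a)) - d * Dn n (Sh c (Sh d a)))
     - Dn n (Sh d a) * HH n (Sh c a) = 0"
proof -
  have r: "(d - c) * Dn n a * (GG n (Sh c (Sh d a)) - c * Dn n (Sh c (Sh d a))) + HH n (Sh d a) * Dn n (Sh c a)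
     - Dn n (Sh d a) * ((d - c) * (GG n (Sh c a) - c * Dn n (Sh c a)) + HH n (Sh c a)) = 0" by (rule I3rel[OF n])
  have i1: "Dn n (Sh c a) * (c * Dn n (Sh d a) + GG n (Sh d a)) - (c - d) * Dn n a * Dn n (Sh c (Sh d a))
     - (d * Dn n (Sh c a) + GG n (Sh c a)) * Dn n (Sh d a) = 0" by (rule I1[OF n])
  have "Dn n (Sh c a) * (d^2 * Dn n (Sh d a) - d * GG n (Sh d a) + HH n (Sh d a))
     + c * Dn n (Sh c a) * (GG n (Sh d a) - d * Dn n (Sh d a))
     - (c - d) * Dn n a * (GG n (Sh c (Sh d a)) - d * Dn n (Sh c (Sh d a)))
     - Dn n (Sh d a) * HH n (Sh c a)
     = (c - d) * (Dn n (Sh c a) * (c * Dn n (Sh d a) + GG n (Sh d a)) - (c - d) * Dn n a * Dn n (Sh c (Sh d a))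
     - (d * Dn n (Sh c a) + GG n (Sh c a)) * Dn n (Sh d a))
     + ((d - c) * Dn n a * (GG n (Sh c (Sh d a)) - c * Dn n (Sh c (Sh d a))) + HH n (Sh d a) * Dn n (Sh c a)
     - Dn n (Sh d a) * ((d - c) * (GG n (Sh c a) - c * Dn n (Sh c a)) + HH n (Sh c a)))"
    by (simp add: algebra_simps power2_eq_square)
  thus ?thesis using r i1 by simp
qed

lemma I7: assumes n: "0 < n"
  shows "(c1 - c2) * (Dn n (Sh c1 a) * Dn n (Sh c2 a) - Dn n a * Dn n (Sh c1 (Sh c2 a)))
     + Dn n (Sh c1 a) * GG n (Sh c2 a) - Dn n (Sh c2 a) * GG n (Sh c1 a) = 0"
proof -
  have "Dn n (Sh c1 a) * (c1 * Dn n (Sh c2 a) + GG n (Sh c2 a)) - (c1 - c2) * Dn n a * Dn n (Sh c1 (Sh c2 a))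
     - (c2 * Dn n (Sh c1 a) + GG n (Sh c1 a)) * Dn n (Sh c2 a) = 0" by (rule I1[OF n])
  moreover have "(c1 - c2) * (Dn n (Sh c1 a) * Dn n (Sh c2 a) - Dn n a * Dn n (Sh c1 (Sh c2 a)))
     + Dn n (Sh c1 a) * GG n (Sh c2 a) - Dn n (Sh c2 a) * GG n (Sh c1 a)
     = Dn n (Sh c1 a) * (c1 * Dn n (Sh c2 a) + GG n (Sh c2 a)) - (c1 - c2) * Dn n a * Dn n (Sh c1 (Sh c2 a))
     - (c2 * Dn n (Sh c1 a) + GG n (Sh c1 a)) * Dn n (Sh c2 a)" by (simp add: algebra_simps)
  ultimately show ?thesis by simp
qed

lemma Sh_app: "Sh c w k = (\<lambda>j. c * w k j + w (Suc k) j)" by (simp add: Sh_def)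

lemma ell_lin3: assumes n: "0 < n"
  shows "ell n Q (\<lambda>j. x1 * v1 j + x2 * v2 j + x3 * v3 j) = x1 * ell n Q v1 + x2 * ell n Q v2 + x3 * ell n Q v3"
proof -
  define p where "p = (\<lambda>j. x1 * v1 j + x2 * v2 j)"
  have e: "(\<lambda>j. x1 * v1 j + x2 * v2 j + x3 * v3 j) = (\<lambda>j. 1 * p j + x3 * v3 j)" by (simp add: p_def)
  have "ell n Q (\<lambda>j. 1 * p j + x3 * v3 j) = 1 * ell n Q p + x3 * ell n Q v3" by (rule ell_lin[OF n])
  moreover have "ell n Q p = x1 * ell n Q v1 + x2 * ell n Q v2" unfolding p_def by (rule ell_lin[OF n])
  ultimately show ?thesis unfolding e by simp
qed

lemma ell_lin4: assumes n: "0 < n"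
  shows "ell n Q (\<lambda>j. x1 * v1 j + x2 * v2 j + x3 * v3 j + x4 * v4 j) = x1 * ell n Q v1 + x2 * ell n Q v2 + x3 * ell n Q v3 + x4 * ell n Q v4"
proof -
  define p where "p = (\<lambda>j. x1 * v1 j + x2 * v2 j + x3 * v3 j)"
  have e: "(\<lambda>j. x1 * v1 j + x2 * v2 j + x3 * v3 j + x4 * v4 j) = (\<lambda>j. 1 * p j + x4 * v4 j)" by (simp add: p_def)
  have "ell n Q (\<lambda>j. 1 * p j + x4 * v4 j) = 1 * ell n Q p + x4 * ell n Q v4" by (rule ell_lin[OF n])
  moreover have "ell n Q p = x1 * ell n Q v1 + x2 * ell n Q v2 + x3 * ell n Q v3" unfolding p_def by (rule ell_lin3[OF n])
  ultimately show ?thesis unfolding e by simp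
qed

lemma I8: assumes n: "0 < n"
  and Krel: "\<And>k i. i < n \<Longrightarrow> (\<Sum>j<n. Km i j * a k j) = a (k+4) i - e1 * a (k+3) i + e2 * a (k+2) i - e3 * a (k+1) i"
  shows "(Qpol e1 e2 c1 c2 * Dn n a * Dn n (Sh c1 (Sh c2 (Sh d a))) + ss n a * Dn n (Sh c1 (Sh c2 (Sh d a)))
     + (c1 + c2 + e1) * GG n a * Dn n (Sh c1 (Sh c2 (Sh d a)))
     - ((c1 + c2 + e1) * Dn n a + GG n a) * (GG n (Sh c1 (Sh c2 (Sh d a))) - d * Dn n (Sh c1 (Sh c2 (Sh d a))))
     + Dn n a * (HH n (Sh c1 (Sh c2 (Sh d a))) - d * GG n (Sh c1 (Sh c2 (Sh d a))) + d^2 * Dn n (Sh c1 (Sh c2 (Sh d a))))) * (c1 - c2)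
     - Rpol e1 e2 e3 c1 d * Dn n (Sh c1 a) * Dn n (Sh c2 (Sh d a))
     + Rpol e1 e2 e3 c2 d * Dn n (Sh c2 a) * Dn n (Sh c1 (Sh d a)) = 0"
proof -
  let ?B = "Sh d a"
  let ?A2d = "Sh c2 ?B"
  let ?A1d = "Sh c1 ?B"
  let ?W = "Sh c1 ?A2d"
  have comm: "Sh c2 ?A1d = ?W" by (auto simp: Sh_def fun_eq_iff algebra_simps)
  define u where "u k = ell n ?W (a k)" for k
  define sg where "sg = (-1::complex)^n"
  have sg1: "(-1::complex)^(n-1) = - sg" unfolding sg_def by (rule sgn1[OF n])
  have sgsg: "sg * sg = 1" unfolding sg_def by simp
  have sgsg2: "sg * (sg * x) = x" for x using sgsg by (simp add: mult.assoc[symmetric])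
  define h where "h k = hook n a k" for k
  define S where "S t = sg * (\<Sum>k\<le>n. (-1)^k * h k * u (k + t))" for t
  define T where "T = Dn n ?W"
  define f where "f = Dn n a"
  define g where "g = GG n a"
  have sn: "Suc (n-1) = n" using n by simp
  have hn: "h n = f" unfolding h_def f_def by (rule hook_top)
  have hn1: "h (n-1) = g" unfolding h_def g_def by (rule hook_G[OF n])
  have lW: "ell n ?W (?W m) = u (m+3) + (c1+c2+d) * u (m+2) + (c1*c2+c1*d+c2*d) * u (m+1) + (c1*c2*d) * u m" for m
  proof -
    have "ell n ?W (?W m) = ell n ?W (\<lambda>j. 1 * a (m+3) j + (c1+c2+d) * a (m+2) j + (c1*c2+c1*d+c2*d) * a (m+1) j + (c1*c2*d) * a m j)"
      by (rule ell_cong) (simp add: Sh_def numeral_3_eq_3 numeral_2_eq_2 algebra_simps)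
    also have "\<dots> = 1 * u (m+3) + (c1+c2+d) * u (m+2) + (c1*c2+c1*d+c2*d) * u (m+1) + (c1*c2*d) * u m"
      unfolding u_def by (rule ell_lin4[OF n])
    finally show ?thesis by simp
  qed
  have lA2: "ell n ?W (?A2d m) = u (m+2) + (c2+d) * u (m+1) + (c2*d) * u m" for m
  proof -
    have "ell n ?W (?A2d m) = ell n ?W (\<lambda>j. 1 * a (m+2) j + (c2+d) * a (m+1) j + (c2*d) * a m j)"
      by (rule ell_cong) (simp add: Sh_def numeral_2_eq_2 algebra_simps)
    also have "\<dots> = 1 * u (m+2) + (c2+d) * u (m+1) + (c2*d) * u m"
      unfolding u_def by (rule ell_lin3[OF n])
    finally show ?thesis by simp
  qed
  have lA1: "ell n ?W (?A1d m) = u (m+2) + (c1+d) * u (m+1) + (c1*d) * u m" for m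
  proof -
    have "ell n ?W (?A1d m) = ell n ?W (\<lambda>j. 1 * a (m+2) j + (c1+d) * a (m+1) j + (c1*d) * a m j)"
      by (rule ell_cong) (simp add: Sh_def numeral_2_eq_2 algebra_simps)
    also have "\<dots> = 1 * u (m+2) + (c1+d) * u (m+1) + (c1*d) * u m"
      unfolding u_def by (rule ell_lin3[OF n])
    finally show ?thesis by simp
  qed
  have lK: "ell n ?W (\<lambda>i. \<Sum>j<n. Km i j * a k j) = u (k+4) - e1 * u (k+3) + e2 * u (k+2) - e3 * u (k+1)" for k
  proof -
    have "ell n ?W (\<lambda>i. \<Sum>j<n. Km i j * a k j) = ell n ?W (\<lambda>i. 1 * a (k+4) i + (- e1) * a (k+3) i + e2 * a (k+2) i + (- e3) * a (k+1) i)"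
      by (rule ell_cong) (simp add: Krel)
    also have "\<dots> = 1 * u (k+4) + (- e1) * u (k+3) + e2 * u (k+2) + (- e3) * u (k+1)"
      unfolding u_def by (rule ell_lin4[OF n])
    finally show ?thesis by simp
  qed
  have zW: "ell n ?W (?W m) = 0" if "m < n - 1" for m by (rule ell_block[OF that])
  have topW: "ell n ?W (?W (n-1)) = T" unfolding T_def by (rule ell_top[OF n])
  have GW: "ell n ?W (?W n) = GG n ?W" unfolding GG_def ..
  have HW: "ell n ?W (?W (Suc n)) = HH n ?W" unfolding HH_def ..
  define p2 where "p2 = ell n ?W (?A2d 0)"
  have p2: "p2 = - sg * Dn n ?A2d" unfolding p2_def using ell_shift0[OF n, of c1 ?A2d] sg1 by simp
  have rec2: "ell n ?W (?W m) = c1 * ell n ?W (?A2d m) + ell n ?W (?A2d (Suc m))" for m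
  proof -
    have e: "?W m = (\<lambda>j. c1 * ?A2d m j + ?A2d (Suc m) j)" by (rule Sh_app)
    show ?thesis unfolding e by (rule ell_lin1[OF n])
  qed
  have geo2: "ell n ?W (?A2d k) = (-c1)^k * p2" if "k \<le> n - 1" for k using that
  proof (induct k)
    case 0 show ?case by (simp add: p2_def)
  next
    case (Suc k)
    hence "k < n - 1" by simp
    hence "0 = c1 * ell n ?W (?A2d k) + ell n ?W (?A2d (Suc k))" using rec2[of k] zW[of k] by simp
    hence "ell n ?W (?A2d (Suc k)) = - c1 * ell n ?W (?A2d k)" by (simp add: eq_neg_iff_add_eq_0 algebra_simps)
    thus ?case using Suc by simp
  qed
  have fA2: "ell n ?W (?A2d k) = (-c1)^k * p2 + (if k = n then T else 0)" if k: "k \<le> n" for k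
  proof (cases "k = n")
    case True
    have "T = c1 * ell n ?W (?A2d (n-1)) + ell n ?W (?A2d n)" using rec2[of "n-1"] topW sn by simp
    moreover have "(-c1)^n = - c1 * (-c1)^(n-1)" using sn by (metis power_Suc mult_minus_left)
    ultimately show ?thesis using True geo2[of "n-1"] by (simp add: algebra_simps)
  next
    case False thus ?thesis using geo2[of k] k by simp
  qed
  define p1 where "p1 = ell n ?W (?A1d 0)"
  have p1: "p1 = - sg * Dn n ?A1d" unfolding p1_def using ell_shift0[OF n, of c2 ?A1d] sg1 comm by simp
  have rec1: "ell n ?W (?W m) = c2 * ell n ?W (?A1d m) + ell n ?W (?A1d (Suc m))" for m
  proof -
    have e: "?W m = (\<lambda>j. c2 * ?A1d m j + ?A1d (Suc m) j)" unfolding comm[symmetric] by (rule Sh_app)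
    show ?thesis unfolding e by (rule ell_lin1[OF n])
  qed
  have geo1: "ell n ?W (?A1d k) = (-c2)^k * p1" if "k \<le> n - 1" for k using that
  proof (induct k)
    case 0 show ?case by (simp add: p1_def)
  next
    case (Suc k)
    hence "k < n - 1" by simp
    hence "0 = c2 * ell n ?W (?A1d k) + ell n ?W (?A1d (Suc k))" using rec1[of k] zW[of k] by simp
    hence "ell n ?W (?A1d (Suc k)) = - c2 * ell n ?W (?A1d k)" by (simp add: eq_neg_iff_add_eq_0 algebra_simps)
    thus ?case using Suc by simp
  qed
  have fA1: "ell n ?W (?A1d k) = (-c2)^k * p1 + (if k = n then T else 0)" if k: "k \<le> n" for k
  proof (cases "k = n")
    case True
    have "T = c2 * ell n ?W (?A1d (n-1)) + ell n ?W (?A1d n)" using rec1[of "n-1"] topW sn by simp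
    moreover have "(-c2)^n = - c2 * (-c2)^(n-1)" using sn by (metis power_Suc mult_minus_left)
    ultimately show ?thesis using True geo1[of "n-1"] by (simp add: algebra_simps)
  next
    case False thus ?thesis using geo1[of k] k by simp
  qed
  have geosum: "(\<Sum>k\<le>n. (-1)^k * h k * ((-c)^k * p + (if k = n then T else 0))) = p * Dn n (Sh c a) + sg * f * T" for c p
  proof -
    have "(\<Sum>k\<le>n. (-1)^k * h k * ((-c)^k * p + (if k = n then T else 0)))
        = (\<Sum>k\<le>n. p * (c^k * h k) + (if k = n then (-1)^k * h k * T else 0))"
    proof (rule sum.cong[OF refl])
      fix k
      have "(-1)^k * h k * ((-c)^k * p + (if k = n then T else 0)) = p * (((-1)^k * (-c)^k) * h k) + (if k = n then (-1)^k * h k * T else 0)"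
        by (simp add: algebra_simps)
      thus "(-1)^k * h k * ((-c)^k * p + (if k = n then T else 0)) = p * (c^k * h k) + (if k = n then (-1)^k * h k * T else 0)"
        unfolding negpow .
    qed
    also have "\<dots> = p * (\<Sum>k\<le>n. c^k * h k) + sg * f * T"
      by (simp add: sum.distrib sum_distrib_left hn sg_def)
    also have "(\<Sum>k\<le>n. c^k * h k) = Dn n (Sh c a)" unfolding h_def by (rule Dn_exp[symmetric])
    finally show ?thesis .
  qed
  have SA2: "S 2 + (c2+d) * S 1 + (c2*d) * S 0 = - (Dn n ?A2d * Dn n (Sh c1 a)) + f * T"
  proof -
    have "S 2 + (c2+d) * S 1 + (c2*d) * S 0 = sg * (\<Sum>k\<le>n. (-1)^k * h k * ell n ?W (?A2d k))"
      unfolding S_def lA2 by (simp add: sum_distrib_left sum.distrib algebra_simps)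
    also have "(\<Sum>k\<le>n. (-1)^k * h k * ell n ?W (?A2d k)) = (\<Sum>k\<le>n. (-1)^k * h k * ((-c1)^k * p2 + (if k = n then T else 0)))"
      by (rule sum.cong[OF refl]) (simp add: fA2)
    also have "\<dots> = p2 * Dn n (Sh c1 a) + sg * f * T" by (rule geosum)
    finally show ?thesis unfolding p2 using sgsg by (simp add: algebra_simps sgsg2)
  qed
  have SA1: "S 2 + (c1+d) * S 1 + (c1*d) * S 0 = - (Dn n ?A1d * Dn n (Sh c2 a)) + f * T"
  proof -
    have "S 2 + (c1+d) * S 1 + (c1*d) * S 0 = sg * (\<Sum>k\<le>n. (-1)^k * h k * ell n ?W (?A1d k))"
      unfolding S_def lA1 by (simp add: sum_distrib_left sum.distrib algebra_simps)
    also have "(\<Sum>k\<le>n. (-1)^k * h k * ell n ?W (?A1d k)) = (\<Sum>k\<le>n. (-1)^k * h k * ((-c2)^k * p1 + (if k = n then T else 0)))"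
      by (rule sum.cong[OF refl]) (simp add: fA1)
    also have "\<dots> = p1 * Dn n (Sh c2 a) + sg * f * T" by (rule geosum)
    finally show ?thesis unfolding p1 using sgsg by (simp add: algebra_simps sgsg2)
  qed
  have S0: "S 0 = 0"
    unfolding S_def h_def u_def using cramer_ell[OF n, of a ?W] by simp
  have SW0: "S 3 + (c1+c2+d) * S 2 + (c1*c2+c1*d+c2*d) * S 1 + (c1*c2*d) * S 0 = - g * T + f * GG n ?W"
  proof -
    have "S 3 + (c1+c2+d) * S 2 + (c1*c2+c1*d+c2*d) * S 1 + (c1*c2*d) * S 0 = sg * (\<Sum>k\<le>n. (-1)^k * h k * ell n ?W (?W k))"
      unfolding S_def lW by (simp add: sum_distrib_left sum.distrib algebra_simps)
    also have "(\<Sum>k\<le>n. (-1)^k * h k * ell n ?W (?W k)) = - sg * g * T + sg * f * GG n ?W"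
    proof -
      have "(\<Sum>k<n-1. (-1)^k * h k * ell n ?W (?W k)) = 0" by (rule sum.neutral) (simp add: zW)
      thus ?thesis unfolding sum_top2[OF n] topW GW hn hn1 sg1 sg_def by simp
    qed
    finally show ?thesis using sgsg by (simp add: algebra_simps sgsg2)
  qed
  have SW1: "S 4 + (c1+c2+d) * S 3 + (c1*c2+c1*d+c2*d) * S 2 + (c1*c2*d) * S 1 = ss n a * T - g * GG n ?W + f * HH n ?W"
  proof -
    have "S 4 + (c1+c2+d) * S 3 + (c1*c2+c1*d+c2*d) * S 2 + (c1*c2*d) * S 1 = sg * (\<Sum>k\<le>n. (-1)^k * h k * ell n ?W (?W (Suc k)))"
      unfolding S_def lW by (simp add: sum_distrib_left sum.distrib algebra_simps numeral_eq_Suc)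
    also have "(\<Sum>k\<le>n. (-1)^k * h k * ell n ?W (?W (Suc k))) = sg * ss n a * T - sg * g * GG n ?W + sg * f * HH n ?W"
    proof -
      have "(\<Sum>k<n-1. (-1)^k * h k * ell n ?W (?W (Suc k))) = (if 0 < n - 1 then (-1)^(n-1-1) * h (n-1-1) * ell n ?W (?W (Suc (n-1-1))) else 0)"
      proof (rule sum_last_only)
        fix k assume "k < n - 1" "k \<noteq> n - 1 - 1"
        hence "Suc k < n - 1" by arith
        thus "(-1)^k * h k * ell n ?W (?W (Suc k)) = 0" by (simp add: zW)
      qed
      also have "\<dots> = sg * ss n a * T"
      proof (cases "2 \<le> n")
        case True
        have e1: "n - 1 - 1 = n - 2" "Suc (n-2) = n - 1" using True by arith+
        show ?thesis unfolding e1 topW using True sgn2[OF True] by (simp add: ss_def h_def sg_def)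
      next
        case False thus ?thesis by (simp add: ss_def)
      qed
      finally have lo: "(\<Sum>k<n-1. (-1)^k * h k * ell n ?W (?W (Suc k))) = sg * ss n a * T" .
      show ?thesis unfolding sum_top2[OF n] lo sn GW HW hn hn1 sg1 sg_def by simp
    qed
    finally show ?thesis using sgsg by (simp add: algebra_simps sgsg2)
  qed
  have SK: "S 4 - e1 * S 3 + e2 * S 2 - e3 * S 1 = 0"
  proof -
    have "S 4 - e1 * S 3 + e2 * S 2 - e3 * S 1 = sg * (\<Sum>k\<le>n. (-1)^k * h k * ell n ?W (\<lambda>i. \<Sum>j<n. Km i j * a k j))"
      unfolding S_def lK by (simp add: sum_distrib_left sum_subtractf sum.distrib algebra_simps)
    also have "(\<Sum>k\<le>n. (-1)^k * h k * ell n ?W (\<lambda>i. \<Sum>j<n. Km i j * a k j)) = 0"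
      unfolding h_def hook_def ell_upd[OF n] by (rule Dn_cramer_lin) (use n in auto)
    finally show ?thesis by simp
  qed
  define GT where "GT = GG n ?W"
  define HT where "HT = HH n ?W"
  define X1 where "X1 = Dn n (Sh c1 a) * Dn n ?A2d"
  define X2 where "X2 = Dn n (Sh c2 a) * Dn n ?A1d"
  define sv where "sv = ss n a"
  define h1 where "h1 = c1 + c2 + d"
  define e2' where "e2' = c1*c2 + c1*d + c2*d"
  define e3' where "e3' = c1*c2*d"
  define Psi where "Psi = h1^2 - e2' + e1 * h1 + e2"
  define kap where "kap = Psi * (c2 + d) + e3' + e3 - e2' * (h1 + e1)"
  define eA where "eA = S 2 + (c2+d) * S 1 + X1 - f * T"
  define eB where "eB = S 2 + (c1+d) * S 1 + X2 - f * T"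
  define eC where "eC = S 3 + h1 * S 2 + e2' * S 1 + g * T - f * GT"
  define eD where "eD = S 4 + h1 * S 3 + e2' * S 2 + e3' * S 1 - (sv * T - g * GT + f * HT)"
  define eK where "eK = S 4 - e1 * S 3 + e2 * S 2 - e3 * S 1"
  have zA: "eA = 0" using SA2 S0 unfolding eA_def X1_def by (simp add: algebra_simps)
  have zB: "eB = 0" using SA1 S0 unfolding eB_def X2_def by (simp add: algebra_simps)
  have zC: "eC = 0" using SW0 S0 unfolding eC_def h1_def e2'_def GT_def by (simp add: algebra_simps)
  have zD: "eD = 0" using SW1 unfolding eD_def h1_def e2'_def e3'_def GT_def HT_def sv_def by (simp add: algebra_simps)
  have zK: "eK = 0" using SK unfolding eK_def .
  have key: "(Qpol e1 e2 c1 c2 * f * T + sv * T + (c1 + c2 + e1) * g * T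
     - ((c1 + c2 + e1) * f + g) * (GT - d * T) + f * (HT - d * GT + d^2 * T)) * (c1 - c2)
     - Rpol e1 e2 e3 c1 d * X1 + Rpol e1 e2 e3 c2 d * X2
     = kap * (eB - eA) - (c1 - c2) * (eD - eK - (h1 + e1) * eC + Psi * eA)"
    unfolding Qpol_def Rpol_def kap_def Psi_def h1_def e2'_def e3'_def eA_def eB_def eC_def eD_def eK_def
    by (simp add: algebra_simps power2_eq_square)
  have "(Qpol e1 e2 c1 c2 * f * T + sv * T + (c1 + c2 + e1) * g * T
     - ((c1 + c2 + e1) * f + g) * (GT - d * T) + f * (HT - d * GT + d^2 * T)) * (c1 - c2)
     - Rpol e1 e2 e3 c1 d * X1 + Rpol e1 e2 e3 c2 d * X2 = 0"
    unfolding key zA zB zC zD zK by simp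
  thus ?thesis unfolding X1_def X2_def GT_def HT_def sv_def T_def f_def g_def by (simp add: algebra_simps)
qed

definition rw :: "nat \<Rightarrow> (int \<Rightarrow> int \<Rightarrow> int \<Rightarrow> int \<Rightarrow> int \<Rightarrow> complex vec) \<Rightarrow> int \<Rightarrow> int \<Rightarrow> int \<Rightarrow> int \<Rightarrow> nat \<Rightarrow> nat \<Rightarrow> complex" where
  "rw N \<phi> n m al be = (\<lambda>k j. if j < N then \<phi> n m al be (int k) $ j else 0)"

lemma cas_Dn: assumes len: "length ls = N"
  shows "casoratian \<phi> N ls n m al be = Dn N (\<lambda>i j. \<phi> n m al be (ls ! i) $ j)"
proof -
  let ?vs = "map (\<lambda>l. \<phi> n m al be l) ls"
  let ?M = "mat_of_cols N ?vs"
  have M: "?M \<in> carrier_mat N N" using len mat_of_cols_carrier[of N ?vs] by simp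
  have "casoratian \<phi> N ls n m al be = det ?M" unfolding casoratian_def using len by simp
  also have "\<dots> = det (transpose_mat ?M)" by (rule det_transpose[OF M, symmetric])
  also have "transpose_mat ?M = mat N N (\<lambda>(i,j). \<phi> n m al be (ls ! i) $ j)"
    by (rule eq_matI) (use len M in \<open>auto simp: mat_of_cols_index\<close>)
  finally show ?thesis unfolding Dn_def by simp
qed

lemma cas_F: "casoratian \<phi> N [0..int N - 1] n m al be = Dn N (rw N \<phi> n m al be)"
proof -
  have "casoratian \<phi> N [0..int N - 1] n m al be = Dn N (\<lambda>i j. \<phi> n m al be ([0..int N - 1] ! i) $ j)"
    by (rule cas_Dn) simp
  also have "\<dots> = Dn N (rw N \<phi> n m al be)" by (rule Dn_cong) (simp add: rw_def)
  finally show ?thesis .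
qed

lemma cas_G: assumes N: "0 < N"
  shows "casoratian \<phi> N ([0..int N - 2] @ [int N]) n m al be = GG N (rw N \<phi> n m al be)"
proof -
  have l0: "length [0..int N - 2] = N - 1" using N by simp
  have len: "length ([0..int N - 2] @ [int N]) = N" using N l0 by simp
  have "casoratian \<phi> N ([0..int N - 2] @ [int N]) n m al be = Dn N (\<lambda>i j. \<phi> n m al be (([0..int N - 2] @ [int N]) ! i) $ j)"
    by (rule cas_Dn[OF len])
  also have "\<dots> = GG N (rw N \<phi> n m al be)"
    unfolding GG_def ell_def
  proof (rule Dn_cong)
    fix i j assume i: "i < N" and j: "j < N"
    show "\<phi> n m al be (([0..int N - 2] @ [int N]) ! i) $ j = (if i < N - 1 then rw N \<phi> n m al be i else rw N \<phi> n m al be N) j"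
    proof (cases "i < N - 1")
      case True
      hence "([0..int N - 2] @ [int N]) ! i = int i" using N l0 by (simp add: nth_append)
      thus ?thesis using True j by (simp add: rw_def)
    next
      case False
      hence "([0..int N - 2] @ [int N]) ! i = int N" using N i l0 by (simp add: nth_append)
      thus ?thesis using False j by (simp add: rw_def)
    qed
  qed
  finally show ?thesis .
qed

lemma cas_H: assumes N: "0 < N"
  shows "casoratian \<phi> N ([0..int N - 2] @ [int N + 1]) n m al be = HH N (rw N \<phi> n m al be)"
proof -
  have l0: "length [0..int N - 2] = N - 1" using N by simp
  have len: "length ([0..int N - 2] @ [int N + 1]) = N" using N l0 by simp
  have "casoratian \<phi> N ([0..int N - 2] @ [int N + 1]) n m al be = Dn N (\<lambda>i j. \<phi> n m al be (([0..int N - 2] @ [int N + 1]) ! i) $ j)"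
    by (rule cas_Dn[OF len])
  also have "\<dots> = HH N (rw N \<phi> n m al be)"
    unfolding HH_def ell_def
  proof (rule Dn_cong)
    fix i j assume i: "i < N" and j: "j < N"
    show "\<phi> n m al be (([0..int N - 2] @ [int N + 1]) ! i) $ j = (if i < N - 1 then rw N \<phi> n m al be i else rw N \<phi> n m al be (Suc N)) j"
    proof (cases "i < N - 1")
      case True
      hence "([0..int N - 2] @ [int N + 1]) ! i = int i" using N l0 by (simp add: nth_append)
      thus ?thesis using True j by (simp add: rw_def)
    next
      case False
      hence "([0..int N - 2] @ [int N + 1]) ! i = int (Suc N)" using N i l0 by (simp add: nth_append)
      thus ?thesis using False j by (simp add: rw_def)
    qed
  qed
  finally show ?thesis .
qed

lemma cas_S: assumes N: "0 < N"
  shows "casoratian \<phi> N ([0..int N - 3] @ [int N - 1, int N]) n m al be = ss N (rw N \<phi> n m al be)"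
proof (cases "N = 1")
  case True
  thus ?thesis unfolding casoratian_def ss_def by simp
next
  case False
  hence N2: "2 \<le> N" using N by arith
  let ?ls = "[0..int N - 3] @ [int N - 1, int N]"
  have l0: "length [0..int N - 3] = N - 2" using N2 by simp
  have len: "length ?ls = N" using N2 l0 by simp
  have "casoratian \<phi> N ?ls n m al be = Dn N (\<lambda>i j. \<phi> n m al be (?ls ! i) $ j)"
    by (rule cas_Dn[OF len])
  also have "\<dots> = ss N (rw N \<phi> n m al be)"
    unfolding ss_def hook_def using N2
  proof (simp, intro Dn_cong)
    fix i j assume i: "i < N" and j: "j < N"
    show "\<phi> n m al be (?ls ! i) $ j = (if i < N - 2 then rw N \<phi> n m al be i else rw N \<phi> n m al be (Suc i)) j"
    proof (cases "i < N - 2")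
      case True
      hence "?ls ! i = int i" using N2 l0 by (simp add: nth_append)
      thus ?thesis using True j by (simp add: rw_def)
    next
      case False
      hence "i = N - 2 \<or> i = N - 1" using i by arith
      hence "?ls ! i = int (Suc i)" using N2 l0 by (auto simp: nth_append)
      thus ?thesis using False j by (simp add: rw_def)
    qed
  qed
  finally show ?thesis .
qed

lemma rw_shift_n:
  assumes dim: "\<And>n m al be l. dim_vec (\<phi> n m al be l) = N"
    and cn: "\<And>n m al be l. c \<cdot>\<^sub>v \<phi> (n-1) m al be l = \<phi> n m al be l - \<phi> (n-1) m al be (l+1)"
  shows "rw N \<phi> (n+1) m al be = Sh c (rw N \<phi> n m al be)"
proof (intro ext)
  fix k j
  show "rw N \<phi> (n+1) m al be k j = Sh c (rw N \<phi> n m al be) k j"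
  proof (cases "j < N")
    case True
    have "(c \<cdot>\<^sub>v \<phi> n m al be (int k)) $ j = (\<phi> (n+1) m al be (int k) - \<phi> n m al be (int k + 1)) $ j"
      using cn[of "n+1" m al be "int k"] by simp
    hence "c * \<phi> n m al be (int k) $ j = \<phi> (n+1) m al be (int k) $ j - \<phi> n m al be (1 + int k) $ j"
      using True dim by (simp add: add.commute)
    thus ?thesis using True unfolding rw_def Sh_def by (simp add: algebra_simps)
  qed (simp add: rw_def Sh_def)
qed

lemma rw_shift_m:
  assumes dim: "\<And>n m al be l. dim_vec (\<phi> n m al be l) = N"
    and cm: "\<And>n m al be l. c \<cdot>\<^sub>v \<phi> n (m-1) al be l = \<phi> n m al be l - \<phi> n (m-1) al be (l+1)"
  shows "rw N \<phi> n (m+1) al be = Sh c (rw N \<phi> n m al be)"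
proof (intro ext)
  fix k j
  show "rw N \<phi> n (m+1) al be k j = Sh c (rw N \<phi> n m al be) k j"
  proof (cases "j < N")
    case True
    have "(c \<cdot>\<^sub>v \<phi> n m al be (int k)) $ j = (\<phi> n (m+1) al be (int k) - \<phi> n m al be (int k + 1)) $ j"
      using cm[of n "m+1" al be "int k"] by simp
    hence "c * \<phi> n m al be (int k) $ j = \<phi> n (m+1) al be (int k) $ j - \<phi> n m al be (1 + int k) $ j"
      using True dim by (simp add: add.commute)
    thus ?thesis using True unfolding rw_def Sh_def by (simp add: algebra_simps)
  qed (simp add: rw_def Sh_def)
qed

lemma rw_shift_b:
  assumes dim: "\<And>n m al be l. dim_vec (\<phi> n m al be l) = N"
    and cb: "\<And>n m al be l. c \<cdot>\<^sub>v \<phi> n m al (be-1) l = \<phi> n m al be l - \<phi> n m al (be-1) (l+1)"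
  shows "rw N \<phi> n m al (be+1) = Sh c (rw N \<phi> n m al be)"
proof (intro ext)
  fix k j
  show "rw N \<phi> n m al (be+1) k j = Sh c (rw N \<phi> n m al be) k j"
  proof (cases "j < N")
    case True
    have "(c \<cdot>\<^sub>v \<phi> n m al be (int k)) $ j = (\<phi> n m al (be+1) (int k) - \<phi> n m al be (int k + 1)) $ j"
      using cb[of n m al "be+1" "int k"] by simp
    hence "c * \<phi> n m al be (int k) $ j = \<phi> n m al (be+1) (int k) $ j - \<phi> n m al be (1 + int k) $ j"
      using True dim by (simp add: add.commute)
    thus ?thesis using True unfolding rw_def Sh_def by (simp add: algebra_simps)
  qed (simp add: rw_def Sh_def)
qed

lemma rw_K:
  assumes dim: "\<And>n m al be l. dim_vec (\<phi> n m al be l) = N"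
    and K: "K \<in> carrier_mat N N"
    and cK: "\<And>n m al be l. K *\<^sub>v \<phi> n m al be l =
        \<phi> n m al be (l+4) - e1 \<cdot>\<^sub>v \<phi> n m al be (l+3) + e2 \<cdot>\<^sub>v \<phi> n m al be (l+2)
        - e3 \<cdot>\<^sub>v \<phi> n m al be (l+1)"
    and i: "i < N"
  shows "(\<Sum>j<N. K $$ (i,j) * rw N \<phi> n m al be k j) = rw N \<phi> n m al be (k+4) i - e1 * rw N \<phi> n m al be (k+3) i
     + e2 * rw N \<phi> n m al be (k+2) i - e3 * rw N \<phi> n m al be (k+1) i"
proof -
  have e1: "(K *\<^sub>v \<phi> n m al be (int k)) $ i = row K i \<bullet> \<phi> n m al be (int k)" using K i by simp
  have e2: "row K i \<bullet> \<phi> n m al be (int k) = (\<Sum>j<N. K $$ (i,j) * rw N \<phi> n m al be k j)"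
    unfolding scalar_prod_def using K i dim by (auto simp: rw_def atLeast0LessThan intro!: sum.cong)
  have A: "(K *\<^sub>v \<phi> n m al be (int k)) $ i = (\<Sum>j<N. K $$ (i,j) * rw N \<phi> n m al be k j)"
    unfolding e1 e2 ..
  have B: "(K *\<^sub>v \<phi> n m al be (int k)) $ i = \<phi> n m al be (int k + 4) $ i - e1 * \<phi> n m al be (int k + 3) $ i
     + e2 * \<phi> n m al be (int k + 2) $ i - e3 * \<phi> n m al be (int k + 1) $ i"
    unfolding cK using i dim by simp
  have r4: "rw N \<phi> n m al be (k+4) i = \<phi> n m al be (int k + 4) $ i" using i by (simp add: rw_def add.commute)
  have r3: "rw N \<phi> n m al be (k+3) i = \<phi> n m al be (int k + 3) $ i" using i by (simp add: rw_def add.commute)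
  have r2: "rw N \<phi> n m al be (k+2) i = \<phi> n m al be (int k + 2) $ i" using i by (simp add: rw_def add.commute)
  have r1: "rw N \<phi> n m al be (k+1) i = \<phi> n m al be (int k + 1) $ i" using i by (simp add: rw_def add.commute)
  from A[symmetric] B have "(\<Sum>j<N. K $$ (i,j) * rw N \<phi> n m al be k j) = \<phi> n m al be (int k + 4) $ i - e1 * \<phi> n m al be (int k + 3) $ i
     + e2 * \<phi> n m al be (int k + 2) $ i - e3 * \<phi> n m al be (int k + 1) $ i" by (rule trans)
  thus ?thesis unfolding r4 r3 r2 r1 .
qed


theorem theorem4p4:
  fixes \<alpha>1 \<alpha>2 \<alpha>3 \<delta> p q a b :: complex
    and N :: nat
    and \<phi> :: "int \<Rightarrow> int \<Rightarrow> int \<Rightarrow> int \<Rightarrow> int \<Rightarrow> complex vec"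
    and K :: "complex mat"
  defines "\<sigma>1 \<equiv> p - \<delta>" and "\<sigma>2 \<equiv> q - \<delta>" and "\<sigma>3 \<equiv> a - \<delta>" and "\<sigma>4 \<equiv> b - \<delta>"
    and "\<epsilon>1 \<equiv> eps1 \<alpha>1 \<alpha>2 \<alpha>3 \<delta>" and "\<epsilon>2 \<equiv> eps2 \<alpha>1 \<alpha>2 \<alpha>3 \<delta>"
    and "\<epsilon>3 \<equiv> eps3 \<alpha>1 \<alpha>2 \<alpha>3 \<delta>"
    and "f \<equiv> casoratian \<phi> N [0..int N - 1]"
    and "g \<equiv> casoratian \<phi> N ([0..int N - 2] @ [int N])"
    and "h \<equiv> casoratian \<phi> N ([0..int N - 2] @ [int N + 1])"
    and "s \<equiv> casoratian \<phi> N ([0..int N - 3] @ [int N - 1, int N])"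
  assumes distinct: "distinct [p, q, a, b]"
    and dim: "\<And>n m al be l. dim_vec (\<phi> n m al be l) = N"
    and K: "K \<in> carrier_mat N N"
    and cn: "\<And>n m al be l. \<sigma>1 \<cdot>\<^sub>v \<phi> (n-1) m al be l = \<phi> n m al be l - \<phi> (n-1) m al be (l+1)"
    and cm: "\<And>n m al be l. \<sigma>2 \<cdot>\<^sub>v \<phi> n (m-1) al be l = \<phi> n m al be l - \<phi> n (m-1) al be (l+1)"
    and ca: "\<And>n m al be l. \<sigma>3 \<cdot>\<^sub>v \<phi> n m (al-1) be l = \<phi> n m al be l - \<phi> n m (al-1) be (l+1)"
    and cb: "\<And>n m al be l. \<sigma>4 \<cdot>\<^sub>v \<phi> n m al (be-1) l = \<phi> n m al be l - \<phi> n m al (be-1) (l+1)"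
    and cK: "\<And>n m al be l. K *\<^sub>v \<phi> n m al be l =
        \<phi> n m al be (l+4) - \<epsilon>1 \<cdot>\<^sub>v \<phi> n m al be (l+3) + \<epsilon>2 \<cdot>\<^sub>v \<phi> n m al be (l+2)
        - \<epsilon>3 \<cdot>\<^sub>v \<phi> n m al be (l+1)"
  shows "\<And>n m al be.
   f (n+1) m al be * (\<sigma>1 * f n m al (be+1) + g n m al (be+1))
     - (\<sigma>1 - \<sigma>4) * f n m al be * f (n+1) m al (be+1)
     - (\<sigma>4 * f (n+1) m al be + g (n+1) m al be) * f n m al (be+1) = 0
 \<and> f n (m+1) al be * (\<sigma>2 * f n m al (be+1) + g n m al (be+1))
     - (\<sigma>2 - \<sigma>4) * f n m al be * f n (m+1) al (be+1)
     - (\<sigma>4 * f n (m+1) al be + g n (m+1) al be) * f n m al (be+1) = 0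
 \<and> f (n+1) m al be * (\<sigma>4^2 * f n m al (be+1) - \<sigma>4 * g n m al (be+1) + h n m al (be+1))
     + \<sigma>1 * f (n+1) m al be * (g n m al (be+1) - \<sigma>4 * f n m al (be+1))
     - (\<sigma>1 - \<sigma>4) * f n m al be * (g (n+1) m al (be+1) - \<sigma>4 * f (n+1) m al (be+1))
     - f n m al (be+1) * h (n+1) m al be = 0
 \<and> f n (m+1) al be * (\<sigma>4^2 * f n m al (be+1) - \<sigma>4 * g n m al (be+1) + h n m al (be+1))
     + \<sigma>2 * f n (m+1) al be * (g n m al (be+1) - \<sigma>4 * f n m al (be+1))
     - (\<sigma>2 - \<sigma>4) * f n m al be * (g n (m+1) al (be+1) - \<sigma>4 * f n (m+1) al (be+1))
     - f n m al (be+1) * h n (m+1) al be = 0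
 \<and> f (n+1) m al be * (\<sigma>1 * g n m al be + h n m al be)
     - g (n+1) m al be * (\<sigma>1 * f n m al be + g n m al be) + f n m al be * s (n+1) m al be = 0
 \<and> f n (m+1) al be * (\<sigma>2 * g n m al be + h n m al be)
     - g n (m+1) al be * (\<sigma>2 * f n m al be + g n m al be) + f n m al be * s n (m+1) al be = 0
 \<and> (\<sigma>1 - \<sigma>2) * (f (n+1) m al be * f n (m+1) al be - f n m al be * f (n+1) (m+1) al be)
     + f (n+1) m al be * g n (m+1) al be - f n (m+1) al be * g (n+1) m al be = 0
 \<and> (Qpol \<epsilon>1 \<epsilon>2 \<sigma>1 \<sigma>2 * f n m al be * f (n+1) (m+1) al (be+1)
     + s n m al be * f (n+1) (m+1) al (be+1)
     + (\<sigma>1 + \<sigma>2 + \<epsilon>1) * g n m al be * f (n+1) (m+1) al (be+1)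
     - ((\<sigma>1 + \<sigma>2 + \<epsilon>1) * f n m al be + g n m al be)
         * (g (n+1) (m+1) al (be+1) - \<sigma>4 * f (n+1) (m+1) al (be+1))
     + f n m al be * (h (n+1) (m+1) al (be+1) - \<sigma>4 * g (n+1) (m+1) al (be+1)
                      + \<sigma>4^2 * f (n+1) (m+1) al (be+1))) * (\<sigma>1 - \<sigma>2)
     - Rpol \<epsilon>1 \<epsilon>2 \<epsilon>3 \<sigma>1 \<sigma>4 * f (n+1) m al be * f n (m+1) al (be+1)
     + Rpol \<epsilon>1 \<epsilon>2 \<epsilon>3 \<sigma>2 \<sigma>4 * f n (m+1) al be * f (n+1) m al (be+1) = 0"

proof (goal_cases)
  case (1 n m al be)
  show ?case
  proof (cases "N = 0")
    case True
    have "mat_of_cols 0 ([]::complex vec list) \<in> carrier_mat 0 0"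
      using mat_of_cols_carrier[of 0 "[]::complex vec list"] by simp
    hence d0: "det (mat_of_cols 0 ([]::complex vec list)) = 1" by (rule det_dim_zero)
    have F0: "f n' m' al' be' = 1" for n' m' al' be' unfolding f_def casoratian_def using True d0 by simp
    have G0: "g n' m' al' be' = 0" for n' m' al' be' unfolding g_def casoratian_def using True by simp
    have H0: "h n' m' al' be' = 0" for n' m' al' be' unfolding h_def casoratian_def using True by simp
    have S0: "s n' m' al' be' = 0" for n' m' al' be' unfolding s_def casoratian_def using True by simp
    show ?thesis unfolding F0 G0 H0 S0 Qpol_def Rpol_def by (simp add: algebra_simps power2_eq_square)
  next
    case False
    hence N0: "0 < N" by simp
    have F: "f n' m' al' be' = Dn N (rw N \<phi> n' m' al' be')" for n' m' al' be' unfolding f_def by (rule cas_F)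
    have G: "g n' m' al' be' = GG N (rw N \<phi> n' m' al' be')" for n' m' al' be' unfolding g_def by (rule cas_G[OF N0])
    have H: "h n' m' al' be' = HH N (rw N \<phi> n' m' al' be')" for n' m' al' be' unfolding h_def by (rule cas_H[OF N0])
    have S: "s n' m' al' be' = ss N (rw N \<phi> n' m' al' be')" for n' m' al' be' unfolding s_def by (rule cas_S[OF N0])
    have rn: "rw N \<phi> (n'+1) m' al' be' = Sh \<sigma>1 (rw N \<phi> n' m' al' be')" for n' m' al' be' by (rule rw_shift_n[where \<phi>=\<phi> and N=N and c=\<sigma>1, OF dim cn])
    have rm: "rw N \<phi> n' (m'+1) al' be' = Sh \<sigma>2 (rw N \<phi> n' m' al' be')" for n' m' al' be' by (rule rw_shift_m[where \<phi>=\<phi> and N=N and c=\<sigma>2, OF dim cm])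
    have rb: "rw N \<phi> n' m' al' (be'+1) = Sh \<sigma>4 (rw N \<phi> n' m' al' be')" for n' m' al' be' by (rule rw_shift_b[where \<phi>=\<phi> and N=N and c=\<sigma>4, OF dim cb])
    define w0 where "w0 = rw N \<phi> n m al be"
    have rb0: "rw N \<phi> n m al (be+1) = Sh \<sigma>4 w0" unfolding w0_def by (rule rb)
    have rn0: "rw N \<phi> (n+1) m al be = Sh \<sigma>1 w0" unfolding w0_def by (rule rn)
    have rm0: "rw N \<phi> n (m+1) al be = Sh \<sigma>2 w0" unfolding w0_def by (rule rm)
    have rnb: "rw N \<phi> (n+1) m al (be+1) = Sh \<sigma>1 (Sh \<sigma>4 w0)" using rn[of n m al "be+1"] rb0 by simp
    have rmb: "rw N \<phi> n (m+1) al (be+1) = Sh \<sigma>2 (Sh \<sigma>4 w0)" using rm[of n m al "be+1"] rb0 by simp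
    have rnm: "rw N \<phi> (n+1) (m+1) al be = Sh \<sigma>1 (Sh \<sigma>2 w0)" using rn[of n "m+1" al be] rm0 by simp
    have rnmb: "rw N \<phi> (n+1) (m+1) al (be+1) = Sh \<sigma>1 (Sh \<sigma>2 (Sh \<sigma>4 w0))" using rn[of n "m+1" al "be+1"] rmb by simp
    have Kw: "\<And>k i. i < N \<Longrightarrow> (\<Sum>j<N. K $$ (i,j) * w0 k j) = w0 (k+4) i - \<epsilon>1 * w0 (k+3) i + \<epsilon>2 * w0 (k+2) i - \<epsilon>3 * w0 (k+1) i"
      unfolding w0_def by (rule rw_K[where \<phi>=\<phi> and N=N and K=K, OF dim K cK])
    have i7: "Dn N (Sh \<sigma>1 w0) * (\<sigma>1 * Dn N (Sh \<sigma>2 w0) + GG N (Sh \<sigma>2 w0)) - (\<sigma>1 - \<sigma>2) * Dn N w0 * Dn N (Sh \<sigma>1 (Sh \<sigma>2 w0))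
     - (\<sigma>2 * Dn N (Sh \<sigma>1 w0) + GG N (Sh \<sigma>1 w0)) * Dn N (Sh \<sigma>2 w0) = 0" by (rule I1[OF N0])
    show ?thesis
      unfolding F G H S rnmb rnb rmb rnm rn0 rm0 rb0 w0_def[symmetric]
      apply (intro conjI)
      apply (rule I1[OF N0])
      apply (rule I1[OF N0])
      apply (rule I3[OF N0])
      apply (rule I3[OF N0])
      apply (rule I5[OF N0])
      apply (rule I5[OF N0])
      apply (rule I7[OF N0])
      apply (rule I8[OF N0])
      apply (rule Kw)
      apply assumption
      done
  qed
qed

end
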